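(* Let $A,\Delta A\in\mathbb{R}^{n\times m}$, $\widetilde A=A+\Delta A$, $1\le r<\min\{n,m\}$, $\operatorname{rank}(A)\ge r$, and assume $\sigma_r-\widetilde\sigma_{r+1}>0$ and $\widetilde\sigma_r-\sigma_{r+1}>0$. Then \[\|\sin\Theta(U_1,\widetilde U_1)\|\le\min\Big\{\frac{\widetilde\sigma_r\|(\Delta A)\widetilde V_1\|+\sigma_{r+1}\|(\Delta A)^T\widetilde U_1\|}{\widetilde\sigma_r^2-\sigma_{r+1}^2},\ \frac{\sigma_r\|(\Delta A)V_1\|+\widetilde\sigma_{r+1}\|U_1^T(\Delta A)\|}{\sigma_r^2-\widetilde\sigma_{r+1}^2}\Big\},\] \[\|\sin\Theta(V_1,\widetilde V_1)\|\le\min\Big\{\frac{\widetilde\sigma_r\|\widetilde U_1^T(\Delta A)\|+\sigma_{r+1}\|(\Delta A)\widetilde V_1\|}{\widetilde\sigma_r^2-\sigma_{r+1}^2},\ \frac{\sigma_r\|U_1^T(\Delta A)\|+\widetilde\sigma_{r+1}\|(\Delta A)V_1\|}{\sigma_r^2-\widetilde\sigma_{r+1}^2}\Big\}.\] Moreover, \[\max\{\|\sin\Theta(U_1,\widetilde U_1)\|,\|\sin\Theta(V_1,\widetilde V_1)\|\}\le\min\Big\{\frac{1}{\sigma_r-\widetilde\sigma_{r+1}},\frac{1}{\widetilde\sigma_r-\sigma_{r+1}}\Big\}\|\Delta A\|.\]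
   Context: $\sigma_1\ge\sigma_2\ge\dots$ and $\widetilde\sigma_1\ge\widetilde\sigma_2\ge\dots$ are the singular values of $A$ and $\widetilde A$ (set to $0$ for indices exceeding $\min\{n,m\}$). $U_1\in\mathbb{R}^{n\times r}$, $V_1\in\mathbb{R}^{m\times r}$ are matrices whose columns are the leading $r$ left, resp. right, singular vectors of $A$ (from a full SVD $A=U\Sigma V^T$), and $\widetilde U_1,\widetilde V_1$ are the analogous matrices for $\widetilde A$. $\|\cdot\|$ is the spectral norm. For $X,\widetilde X\in\mathbb{R}^{d\times r}$ with orthonormal columns, if $\zeta_1\ge\dots\ge\zeta_r$ are the singular values of $X^T\widetilde X$, then $\sin\Theta(X,\widetilde X)=\mathrm{diag}(\sqrt{1-\zeta_1^2},\dots,\sqrt{1-\zeta_r^2})$. *)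

theory Defs
  imports "Jordan_Normal_Form.DL_Rank" "Jordan_Normal_Form.Matrix"
begin

definition is_svd :: "real mat \<Rightarrow> real mat \<Rightarrow> real mat \<Rightarrow> real mat \<Rightarrow> bool" where
  "is_svd A U S V \<longleftrightarrow>
     (let n = dim_row A; m = dim_col A in
      U \<in> carrier_mat n n \<and> V \<in> carrier_mat m m \<and> S \<in> carrier_mat n m \<and>
      transpose_mat U * U = 1\<^sub>m n \<and> transpose_mat V * V = 1\<^sub>m m \<and>
      diagonal_mat S \<and>
      (\<forall>i < min n m. 0 \<le> S $$ (i,i)) \<and>
      (\<forall>i j. i \<le> j \<and> j < min n m \<longrightarrow> S $$ (j,j) \<le> S $$ (i,i)) \<and>
      A = U * S * transpose_mat V)"

(* i-th (1-based) diagonal entry of a rectangular diagonal S; 0 beyond min{n,m} *)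
definition sval :: "real mat \<Rightarrow> nat \<Rightarrow> real" where
  "sval S i = (if 1 \<le> i \<and> i \<le> min (dim_row S) (dim_col S) then S $$ (i-1, i-1) else 0)"

definition sing_val :: "real mat \<Rightarrow> nat \<Rightarrow> real" where
  "sing_val M i = sval (SOME S. \<exists>U V. is_svd M U S V) i"

definition lead_cols :: "real mat \<Rightarrow> nat \<Rightarrow> real mat" where
  "lead_cols X r = mat (dim_row X) r (\<lambda>(i,j). X $$ (i,j))"

definition vnorm :: "real vec \<Rightarrow> real" where
  "vnorm v = sqrt (\<Sum>i<dim_vec v. (v $ i)^2)"

definition spec_norm :: "real mat \<Rightarrow> real" where
  "spec_norm M = Sup (insert 0 {vnorm (M *\<^sub>v x) | x. x \<in> carrier_vec (dim_col M) \<and> vnorm x = 1})"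

definition sin_theta :: "real mat \<Rightarrow> real mat \<Rightarrow> real mat" where
  "sin_theta X Xt = mat (dim_col X) (dim_col X)
     (\<lambda>(i,j). if i = j then sqrt (1 - (sing_val (transpose_mat X * Xt) (i+1))^2) else 0)"

end

theory Submission
  imports Defs "HOL-Analysis.L2_Norm" "Jordan_Normal_Form.Spectral_Radius"
begin

lemma vnorm_L2: "vnorm v = L2_set (\<lambda>i. v $ i) {..<dim_vec v}"
  unfolding vnorm_def L2_set_def by simp

lemma dot_self: "(v::real vec) \<bullet> v = (\<Sum>i<dim_vec v. (v $ i)^2)"
  unfolding scalar_prod_def atLeast0LessThan by (rule sum.cong) (auto simp: power2_eq_square)

lemma vnorm_nonneg: "vnorm v \<ge> 0"
  unfolding vnorm_def by (simp add: sum_nonneg)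

lemma vnorm_sq: "(vnorm v)^2 = (v::real vec) \<bullet> v"
  unfolding vnorm_def dot_self by (simp add: sum_nonneg power2_eq_square)

lemma dot_self_nonneg: "(v::real vec) \<bullet> v \<ge> 0"
  unfolding dot_self by (simp add: sum_nonneg)

lemma vnorm_eq_sqrt: "vnorm v = sqrt ((v::real vec) \<bullet> v)"
  unfolding vnorm_def dot_self ..

lemma cauchy_schwarz:
  assumes "v \<in> carrier_vec k" "w \<in> carrier_vec k"
  shows "v \<bullet> w \<le> vnorm v * vnorm w"
proof -
  have "v \<bullet> w = (\<Sum>i<k. v $ i * w $ i)" using assms unfolding scalar_prod_def
    by (simp add: atLeast0LessThan)
  also have "\<dots> \<le> (\<Sum>i<k. \<bar>v $ i\<bar> * \<bar>w $ i\<bar>)"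
    by (intro sum_mono) (metis abs_ge_self abs_mult)
  also have "\<dots> \<le> L2_set (\<lambda>i. v $ i) {..<k} * L2_set (\<lambda>i. w $ i) {..<k}"
    by (rule L2_set_mult_ineq)
  finally show ?thesis using assms unfolding vnorm_L2 by simp
qed

lemma dot_transpose:
  fixes A :: "'a::comm_semiring_0 mat"
  assumes A: "A \<in> carrier_mat n m" and v: "v \<in> carrier_vec m" and w: "w \<in> carrier_vec n"
  shows "(A *\<^sub>v v) \<bullet> w = v \<bullet> (transpose_mat A *\<^sub>v w)"
proof -
  have "(A *\<^sub>v v) \<bullet> w = (\<Sum>i<n. (\<Sum>j<m. A $$ (i,j) * v $ j) * w $ i)"
    using A v w unfolding scalar_prod_def
    by (auto simp: atLeast0LessThan row_def scalar_prod_def intro!: sum.cong)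
  also have "\<dots> = (\<Sum>j<m. v $ j * (\<Sum>i<n. A $$ (i,j) * w $ i))"
    by (simp add: sum_distrib_left sum_distrib_right sum.swap[of _ "{..<n}"] ac_simps)
  also have "\<dots> = v \<bullet> (transpose_mat A *\<^sub>v w)"
    using A v w unfolding scalar_prod_def
    by (auto simp: atLeast0LessThan row_def col_def scalar_prod_def intro!: sum.cong)
  finally show ?thesis .
qed

lemma orth_dot:
  fixes Q :: "real mat"
  assumes Q: "Q \<in> carrier_mat k l" and QQ: "transpose_mat Q * Q = 1\<^sub>m l"
    and v: "v \<in> carrier_vec l" and w: "w \<in> carrier_vec l"
  shows "(Q *\<^sub>v v) \<bullet> (Q *\<^sub>v w) = v \<bullet> w"
proof -
  have "(Q *\<^sub>v v) \<bullet> (Q *\<^sub>v w) = v \<bullet> (transpose_mat Q *\<^sub>v (Q *\<^sub>v w))"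
    using Q v w by (intro dot_transpose) auto
  also have "transpose_mat Q *\<^sub>v (Q *\<^sub>v w) = (transpose_mat Q * Q) *\<^sub>v w"
    using Q w by (subst assoc_mult_mat_vec) auto
  finally show ?thesis using QQ w by simp
qed

lemma orth_vnorm:
  fixes Q :: "real mat"
  assumes Q: "Q \<in> carrier_mat k l" and QQ: "transpose_mat Q * Q = 1\<^sub>m l"
    and v: "v \<in> carrier_vec l"
  shows "vnorm (Q *\<^sub>v v) = vnorm v"
  unfolding vnorm_eq_sqrt using orth_dot[OF Q QQ v v] by simp

lemma vnorm_smult: "vnorm (c \<cdot>\<^sub>v v) = \<bar>c\<bar> * vnorm v"
proof -
  have "vnorm (c \<cdot>\<^sub>v v) = sqrt (c^2 * (\<Sum>i<dim_vec v. (v $ i)^2))"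
    unfolding vnorm_def by (simp add: sum_distrib_left power_mult_distrib)
  thus ?thesis unfolding vnorm_def by (simp add: real_sqrt_mult)
qed

lemma vnorm_zero_iff: "v \<in> carrier_vec k \<Longrightarrow> vnorm v = 0 \<longleftrightarrow> v = 0\<^sub>v k"
proof -
  assume v: "v \<in> carrier_vec k"
  have "vnorm v = 0 \<longleftrightarrow> (\<Sum>i<k. (v $ i)^2) = 0" using v unfolding vnorm_def by simp
  also have "\<dots> \<longleftrightarrow> (\<forall>i<k. v $ i = 0)" by (auto simp: sum_nonneg_eq_0_iff)
  also have "\<dots> \<longleftrightarrow> v = 0\<^sub>v k" using v by (auto simp: vec_eq_iff)
  finally show ?thesis .
qed

lemma mat_vec_bound:
  fixes M :: "real mat"
  assumes M: "M \<in> carrier_mat a b" and x: "x \<in> carrier_vec b" and x1: "vnorm x = 1"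
  shows "vnorm (M *\<^sub>v x) \<le> (\<Sum>i<a. \<Sum>j<b. \<bar>M $$ (i,j)\<bar>)"
proof -
  have xj: "\<bar>x $ j\<bar> \<le> 1" if "j < b" for j
  proof -
    have "(x $ j)^2 \<le> (\<Sum>i<b. (x $ i)^2)"
      using that by (intro member_le_sum) auto
    also have "\<dots> = 1" using x1 x unfolding vnorm_def by simp
    finally show ?thesis by (simp add: abs_square_le_1)
  qed
  have "vnorm (M *\<^sub>v x) \<le> (\<Sum>i<a. \<bar>(M *\<^sub>v x) $ i\<bar>)"
    unfolding vnorm_L2 using M L2_set_le_sum_abs[of "\<lambda>i. (M *\<^sub>v x) $ i" "{..<a}"] by simp
  also have "\<dots> \<le> (\<Sum>i<a. \<Sum>j<b. \<bar>M $$ (i,j)\<bar>)"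
  proof (rule sum_mono)
    fix i assume i: "i \<in> {..<a}"
    have "(M *\<^sub>v x) $ i = (\<Sum>j<b. M $$ (i,j) * x $ j)"
      using M x i by (auto simp: row_def atLeast0LessThan scalar_prod_def)
    also have "\<bar>\<dots>\<bar> \<le> (\<Sum>j<b. \<bar>M $$ (i,j) * x $ j\<bar>)" by (rule sum_abs)
    also have "\<dots> \<le> (\<Sum>j<b. \<bar>M $$ (i,j)\<bar>)"
      by (intro sum_mono) (simp add: abs_mult mult_left_le xj)
    finally show "\<bar>(M *\<^sub>v x) $ i\<bar> \<le> (\<Sum>j<b. \<bar>M $$ (i,j)\<bar>)" .
  qed
  finally show ?thesis .
qed

lemma spec_norm_bdd:
  fixes M :: "real mat"
  shows "bdd_above (insert 0 {vnorm (M *\<^sub>v x) | x. x \<in> carrier_vec (dim_col M) \<and> vnorm x = 1})"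
  by (rule bdd_aboveI[where M = "\<Sum>i<dim_row M. \<Sum>j<dim_col M. \<bar>M $$ (i,j)\<bar>"])
    (auto intro!: mat_vec_bound sum_nonneg)

lemma spec_norm_nonneg: "spec_norm M \<ge> 0"
  unfolding spec_norm_def by (rule cSup_upper[OF _ spec_norm_bdd]) auto

lemma spec_norm_le:
  fixes M :: "real mat"
  assumes M: "M \<in> carrier_mat a b" and c: "c \<ge> 0"
    and H: "\<And>x. x \<in> carrier_vec b \<Longrightarrow> vnorm (M *\<^sub>v x) \<le> c * vnorm x"
  shows "spec_norm M \<le> c"
  unfolding spec_norm_def using M c by (intro cSup_least) (auto, metis H mult.right_neutral)

lemma spec_norm_ge:
  fixes M :: "real mat"
  assumes M: "M \<in> carrier_mat a b" and x: "x \<in> carrier_vec b"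
  shows "vnorm (M *\<^sub>v x) \<le> spec_norm M * vnorm x"
proof (cases "vnorm x = 0")
  case True
  hence "x = 0\<^sub>v b" using vnorm_zero_iff[OF x] by simp
  thus ?thesis using M by (simp add: vnorm_def)
next
  case False
  define y where "y = (1 / vnorm x) \<cdot>\<^sub>v x"
  have y: "y \<in> carrier_vec b" using x by (simp add: y_def)
  have y1: "vnorm y = 1" using False vnorm_nonneg[of x] by (simp add: y_def vnorm_smult)
  have "vnorm (M *\<^sub>v y) \<le> spec_norm M"
    unfolding spec_norm_def using M y y1 by (intro cSup_upper[OF _ spec_norm_bdd]) auto
  moreover have "M *\<^sub>v x = vnorm x \<cdot>\<^sub>v (M *\<^sub>v y)"
    using False M x by (simp add: y_def mult_mat_vec smult_smult_assoc)
  ultimately show ?thesis using vnorm_nonneg[of x] mult_right_mono[of "vnorm (M *\<^sub>v y)" "spec_norm M" "vnorm x"]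
    by (simp add: vnorm_smult mult.commute)
qed

lemma mult_entry:
  fixes A B :: "'a::comm_semiring_0 mat"
  assumes "A \<in> carrier_mat a b" "B \<in> carrier_mat b c" "i < a" "j < c"
  shows "(A * B) $$ (i,j) = (\<Sum>k<b. A $$ (i,k) * B $$ (k,j))"
  using assms by (auto simp: scalar_prod_def row_def col_def atLeast0LessThan intro!: sum.cong)

lemma mv_entry:
  fixes A :: "'a::comm_semiring_0 mat"
  assumes "A \<in> carrier_mat a b" "v \<in> carrier_vec b" "i < a"
  shows "(A *\<^sub>v v) $ i = (\<Sum>k<b. A $$ (i,k) * v $ k)"
  using assms by (auto simp: scalar_prod_def row_def atLeast0LessThan intro!: sum.cong)

lemma dot_sum:
  assumes "w \<in> carrier_vec k"
  shows "v \<bullet> w = (\<Sum>i<k. v $ i * w $ i)"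
  using assms by (auto simp: scalar_prod_def atLeast0LessThan)

lemma kernel_wide:
  fixes Q :: "real mat"
  assumes Q: "Q \<in> carrier_mat n k" and kn: "k < n"
  shows "\<exists>w. w \<in> carrier_vec n \<and> w \<noteq> 0\<^sub>v n \<and> (\<forall>j<k. (\<Sum>i<n. Q $$ (i,j) * w $ i) = 0)"
proof -
  define Z where "Z = mat\<^sub>r n n (\<lambda>i. if i = n - 1 then 0\<^sub>v n else (if i < k then col Q i else 0\<^sub>v n))"
  have "det Z = 0" unfolding Z_def
    by (rule det_row_0) (use kn Q in auto)
  moreover have Zc: "Z \<in> carrier_mat n n" unfolding Z_def by auto
  ultimately obtain v where v: "v \<in> carrier_vec n" "v \<noteq> 0\<^sub>v n" "Z *\<^sub>v v = 0\<^sub>v n"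
    using det_0_iff_vec_prod_zero_field[OF Zc] by auto
  have "(\<Sum>i<n. Q $$ (i,j) * v $ i) = 0" if j: "j < k" for j
  proof -
    have "(Z *\<^sub>v v) $ j = 0" using v(3) j kn by simp
    moreover have "(Z *\<^sub>v v) $ j = (\<Sum>i<n. Z $$ (j,i) * v $ i)"
      using Zc v j kn by (intro mv_entry[of _ n n]) auto
    moreover have "Z $$ (j,i) = Q $$ (i,j)" if "i < n" for i
      using that j kn Q unfolding Z_def by (auto simp: col_def)
    ultimately show ?thesis by simp
  qed
  thus ?thesis using v by blast
qed

lemma complete_orth:
  fixes Q0 :: "real mat"
  assumes "Q0 \<in> carrier_mat n k" "transpose_mat Q0 * Q0 = 1\<^sub>m k" "k \<le> n"
  shows "\<exists>W. W \<in> carrier_mat n n \<and> transpose_mat W * W = 1\<^sub>m n \<and>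
           (\<forall>i<n. \<forall>j<k. W $$ (i,j) = Q0 $$ (i,j))"
  using assms
proof (induction "n - k" arbitrary: k Q0)
  case 0
  hence "k = n" by simp
  thus ?case using 0 by blast
next
  case (Suc d)
  hence kn: "k < n" by simp
  have QQ: "(\<Sum>i<n. Q0 $$ (i,j) * Q0 $$ (i,j')) = (if j = j' then 1 else 0)" if "j < k" "j' < k" for j j'
  proof -
    have "(transpose_mat Q0 * Q0) $$ (j,j') = (\<Sum>i<n. transpose_mat Q0 $$ (j,i) * Q0 $$ (i,j'))"
      using Suc.prems that by (intro mult_entry[of _ k n _ k]) auto
    thus ?thesis using Suc.prems that by simp
  qed
  obtain v where v: "v \<in> carrier_vec n" "v \<noteq> 0\<^sub>v n" "\<forall>j<k. (\<Sum>i<n. Q0 $$ (i,j) * v $ i) = 0"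
    using kernel_wide[OF Suc.prems(1) kn] by blast
  have nv: "vnorm v > 0" using vnorm_zero_iff[OF v(1)] v(2) vnorm_nonneg[of v] by auto
  define w where "w = (1 / vnorm v) \<cdot>\<^sub>v v"
  have w: "w \<in> carrier_vec n" unfolding w_def using v by simp
  have w1: "(\<Sum>i<n. w $ i * w $ i) = 1"
  proof -
    have "vnorm w = 1" unfolding w_def vnorm_smult using nv by simp
    hence "w \<bullet> w = 1" using vnorm_sq[of w] by simp
    thus ?thesis using dot_sum[OF w] by simp
  qed
  have w0: "(\<Sum>i<n. Q0 $$ (i,j) * w $ i) = 0" if "j < k" for j
  proof -
    have "(\<Sum>i<n. Q0 $$ (i,j) * w $ i) = (1 / vnorm v) * (\<Sum>i<n. Q0 $$ (i,j) * v $ i)"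
      unfolding w_def using v(1) by (simp add: sum_distrib_left ac_simps)
    thus ?thesis using v(3) that by simp
  qed
  define Q1 where "Q1 = mat n (Suc k) (\<lambda>(i,j). if j < k then Q0 $$ (i,j) else w $ i)"
  have Q1: "Q1 \<in> carrier_mat n (Suc k)" unfolding Q1_def by simp
  have "transpose_mat Q1 * Q1 = 1\<^sub>m (Suc k)"
  proof (rule eq_matI)
    fix j j' assume j: "j < dim_row (1\<^sub>m (Suc k))" and j': "j' < dim_col (1\<^sub>m (Suc k))"
    have "(transpose_mat Q1 * Q1) $$ (j,j') = (\<Sum>i<n. Q1 $$ (i,j) * Q1 $$ (i,j'))"
      using Q1 j j' by (subst mult_entry[of _ "Suc k" n _ "Suc k"]) auto
    also have "\<dots> = 1\<^sub>m (Suc k) $$ (j,j')"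
    proof -
      consider "j < k" "j' < k" | "j < k" "j' = k" | "j = k" "j' < k" | "j = k" "j' = k"
        using j j' by fastforce
      thus ?thesis
      proof cases
        case 1 thus ?thesis using QQ[of j j'] unfolding Q1_def by (auto intro!: sum.cong)
      next
        case 2 thus ?thesis using w0[of j] unfolding Q1_def by (auto intro!: sum.cong)
      next
        case 3 thus ?thesis using w0[of j'] unfolding Q1_def by (auto simp: mult.commute intro!: sum.cong)
      next
        case 4 thus ?thesis using w1 unfolding Q1_def by (auto intro!: sum.cong)
      qed
    qed
    finally show "(transpose_mat Q1 * Q1) $$ (j,j') = 1\<^sub>m (Suc k) $$ (j,j')" .
  qed (use Q1 in auto)
  moreover have "d = n - Suc k" using Suc by simp
  ultimately obtain W where W: "W \<in> carrier_mat n n" "transpose_mat W * W = 1\<^sub>m n"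
    "\<forall>i<n. \<forall>j<Suc k. W $$ (i,j) = Q1 $$ (i,j)"
    using Suc.hyps(1)[of "Suc k" Q1] Q1 kn by auto
  thus ?case unfolding Q1_def by auto
qed

lemma sym_real_eigen:
  fixes S :: "real mat"
  assumes S: "S \<in> carrier_mat n n" and sym: "transpose_mat S = S" and n: "n > 0"
  shows "\<exists>e v. v \<in> carrier_vec n \<and> v \<noteq> 0\<^sub>v n \<and> S *\<^sub>v v = e \<cdot>\<^sub>v v"
proof -
  define Sc where "Sc = map_mat complex_of_real S"
  have Sc: "Sc \<in> carrier_mat n n" unfolding Sc_def using S by simp
  obtain a where "a \<in> spectrum Sc" using spectrum_non_empty[OF Sc n] by blast
  then obtain v where ev: "eigenvector Sc v a" unfolding spectrum_def eigenvalue_def by auto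
  hence v: "v \<in> carrier_vec n" "v \<noteq> 0\<^sub>v n" "Sc *\<^sub>v v = a \<cdot>\<^sub>v v"
    unfolding eigenvector_def using Sc by auto
  have symij: "S $$ (i,j) = S $$ (j,i)" if "i < n" "j < n" for i j
    using arg_cong[OF sym, of "\<lambda>M. M $$ (j,i)"] that S by auto
  have eq: "(\<Sum>j<n. complex_of_real (S $$ (i,j)) * v $ j) = a * v $ i" if i: "i < n" for i
  proof -
    have "(Sc *\<^sub>v v) $ i = (\<Sum>j<n. Sc $$ (i,j) * v $ j)" using Sc v i by (intro mv_entry) auto
    also have "\<dots> = (\<Sum>j<n. complex_of_real (S $$ (i,j)) * v $ j)"
      using S i unfolding Sc_def by (intro sum.cong) auto
    finally show ?thesis using v(3) v(1) i by simp
  qed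
  define q where "q = (\<Sum>i<n. cnj (v $ i) * (\<Sum>j<n. complex_of_real (S $$ (i,j)) * v $ j))"
  define N where "N = (\<Sum>i<n. (cmod (v $ i))^2)"
  have q1: "q = a * complex_of_real N"
  proof -
    have "q = (\<Sum>i<n. a * (cnj (v $ i) * v $ i))" unfolding q_def
      by (intro sum.cong refl) (subst eq; simp add: mult.left_commute)
    also have "\<dots> = a * (\<Sum>i<n. complex_of_real ((cmod (v $ i))^2))"
      unfolding sum_distrib_left by (intro sum.cong refl) (metis complex_norm_square mult.commute)
    finally show ?thesis unfolding N_def by simp
  qed
  have q2: "cnj q = q"
  proof -
    have "cnj q = (\<Sum>i<n. \<Sum>j<n. v $ i * (complex_of_real (S $$ (i,j)) * cnj (v $ j)))"
      unfolding q_def by (simp add: sum_distrib_left)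
    also have "\<dots> = (\<Sum>j<n. \<Sum>i<n. v $ i * (complex_of_real (S $$ (i,j)) * cnj (v $ j)))"
      by (rule sum.swap)
    also have "\<dots> = q" unfolding q_def sum_distrib_left
      by (intro sum.cong refl) (auto simp: symij ac_simps)
    finally show ?thesis .
  qed
  have Npos: "N > 0"
  proof -
    obtain i where i: "i < n" "v $ i \<noteq> 0" using v(1,2) by (auto simp: vec_eq_iff)
    have "(cmod (v $ i))^2 \<le> N" unfolding N_def using i by (intro member_le_sum) auto
    moreover have "(cmod (v $ i))^2 > 0" using i by simp
    ultimately show ?thesis by linarith
  qed
  have "Im q = 0" using q2 by (metis Reals_cnj_iff complex_is_Real_iff)
  hence "Im a * N = 0" using q1 by simp
  hence Ima: "Im a = 0" using Npos by simp
  define e where "e = Re a"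
  have ae: "a = complex_of_real e" unfolding e_def using Ima by (simp add: complex_eq_iff)
  define wr where "wr = vec n (\<lambda>i. Re (v $ i))"
  define wi where "wi = vec n (\<lambda>i. Im (v $ i))"
  have rowr: "(\<Sum>j<n. S $$ (i,j) * Re (v $ j)) = e * Re (v $ i)"
    and rowi: "(\<Sum>j<n. S $$ (i,j) * Im (v $ j)) = e * Im (v $ i)" if "i < n" for i
  proof -
    have "Re (\<Sum>j<n. complex_of_real (S $$ (i,j)) * v $ j) = (\<Sum>j<n. S $$ (i,j) * Re (v $ j))"
      by (simp add: Re_sum)
    thus "(\<Sum>j<n. S $$ (i,j) * Re (v $ j)) = e * Re (v $ i)" using eq[OF that] ae by simp
    have "Im (\<Sum>j<n. complex_of_real (S $$ (i,j)) * v $ j) = (\<Sum>j<n. S $$ (i,j) * Im (v $ j))"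
      by (simp add: Im_sum)
    thus "(\<Sum>j<n. S $$ (i,j) * Im (v $ j)) = e * Im (v $ i)" using eq[OF that] ae by simp
  qed
  have Swr: "S *\<^sub>v wr = e \<cdot>\<^sub>v wr"
  proof (rule eq_vecI)
    fix i assume "i < dim_vec (e \<cdot>\<^sub>v wr)"
    hence i: "i < n" unfolding wr_def by simp
    have "(S *\<^sub>v wr) $ i = (\<Sum>j<n. S $$ (i,j) * wr $ j)" using S i by (intro mv_entry) (auto simp: wr_def)
    also have "\<dots> = (\<Sum>j<n. S $$ (i,j) * Re (v $ j))" unfolding wr_def by (intro sum.cong) auto
    finally show "(S *\<^sub>v wr) $ i = (e \<cdot>\<^sub>v wr) $ i" using rowr[OF i] i by (simp add: wr_def)
  qed (use S in \<open>auto simp: wr_def\<close>)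
  have Swi: "S *\<^sub>v wi = e \<cdot>\<^sub>v wi"
  proof (rule eq_vecI)
    fix i assume "i < dim_vec (e \<cdot>\<^sub>v wi)"
    hence i: "i < n" unfolding wi_def by simp
    have "(S *\<^sub>v wi) $ i = (\<Sum>j<n. S $$ (i,j) * wi $ j)" using S i by (intro mv_entry) (auto simp: wi_def)
    also have "\<dots> = (\<Sum>j<n. S $$ (i,j) * Im (v $ j))" unfolding wi_def by (intro sum.cong) auto
    finally show "(S *\<^sub>v wi) $ i = (e \<cdot>\<^sub>v wi) $ i" using rowi[OF i] i by (simp add: wi_def)
  qed (use S in \<open>auto simp: wi_def\<close>)
  obtain i where i: "i < n" "v $ i \<noteq> 0" using v(1,2) by (auto simp: vec_eq_iff)
  hence "wr \<noteq> 0\<^sub>v n \<or> wi \<noteq> 0\<^sub>v n"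
    unfolding wr_def wi_def by (auto simp: vec_eq_iff complex_eq_iff)
  moreover have "wr \<in> carrier_vec n" "wi \<in> carrier_vec n" unfolding wr_def wi_def by auto
  ultimately show ?thesis using Swr Swi by blast
qed

definition diagm :: "nat \<Rightarrow> (nat \<Rightarrow> real) \<Rightarrow> real mat" where
  "diagm n d = mat n n (\<lambda>(i,j). if i = j then d i else 0)"

lemma diagm_carrier[simp]: "diagm n d \<in> carrier_mat n n"
  unfolding diagm_def by simp

lemma diagm_dims[simp]: "dim_row (diagm n d) = n" "dim_col (diagm n d) = n"
  unfolding diagm_def by simp_all

lemma mult_diagm:
  assumes B: "B \<in> carrier_mat m n"
  shows "B * diagm n d = mat m n (\<lambda>(i,k). B $$ (i,k) * d k)"
proof (rule eq_matI)
  fix i k assume "i < dim_row (mat m n (\<lambda>(i,k). B $$ (i,k) * d k))" "k < dim_col (mat m n (\<lambda>(i,k). B $$ (i,k) * d k))"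
  hence ik: "i < m" "k < n" by auto
  have "(B * diagm n d) $$ (i,k) = (\<Sum>l<n. B $$ (i,l) * diagm n d $$ (l,k))"
    using B ik by (intro mult_entry) auto
  also have "\<dots> = (\<Sum>l<n. if l = k then B $$ (i,k) * d k else 0)"
    using ik unfolding diagm_def by (intro sum.cong) auto
  also have "\<dots> = B $$ (i,k) * d k" using ik by simp
  finally show "(B * diagm n d) $$ (i,k) = mat m n (\<lambda>(i,k). B $$ (i,k) * d k) $$ (i,k)" using ik by simp
qed (use B in auto)

lemma quad_entry:
  assumes B: "B \<in> carrier_mat m n" and i: "i < m" and j: "j < m"
  shows "(B * diagm n d * transpose_mat B) $$ (i,j) = (\<Sum>k<n. B $$ (i,k) * d k * B $$ (j,k))"
proof -
  have "(B * diagm n d * transpose_mat B) $$ (i,j) = (\<Sum>k<n. (B * diagm n d) $$ (i,k) * transpose_mat B $$ (k,j))"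
    using B i j by (intro mult_entry[of _ m n]) auto
  also have "\<dots> = (\<Sum>k<n. B $$ (i,k) * d k * B $$ (j,k))"
    using B i j by (intro sum.cong) (auto simp: mult_diagm)
  finally show ?thesis .
qed

lemma orth_entry:
  fixes Q :: "real mat"
  assumes Q: "Q \<in> carrier_mat m n" and QQ: "transpose_mat Q * Q = 1\<^sub>m n" and i: "i < n" and j: "j < n"
  shows "(\<Sum>k<m. Q $$ (k,i) * Q $$ (k,j)) = (if i = j then 1 else 0)"
proof -
  have "(transpose_mat Q * Q) $$ (i,j) = (\<Sum>k<m. transpose_mat Q $$ (i,k) * Q $$ (k,j))"
    using Q i j by (intro mult_entry[of _ n m]) auto
  thus ?thesis using QQ Q i j by auto
qed

lemma orth_right:
  fixes Q :: "real mat"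
  assumes Q: "Q \<in> carrier_mat n n" and QQ: "transpose_mat Q * Q = 1\<^sub>m n"
  shows "Q * transpose_mat Q = 1\<^sub>m n"
  using mat_mult_left_right_inverse[of "transpose_mat Q" n Q] Q QQ by auto

lemma triple_entry:
  fixes W S :: "real mat"
  assumes W: "W \<in> carrier_mat N N" and S: "S \<in> carrier_mat N N" and i: "i < N" and j: "j < N"
  shows "(transpose_mat W * S * W) $$ (i,j) = (\<Sum>k<N. \<Sum>l<N. W $$ (k,i) * S $$ (k,l) * W $$ (l,j))"
proof -
  have "(transpose_mat W * S * W) $$ (i,j) = (\<Sum>l<N. (transpose_mat W * S) $$ (i,l) * W $$ (l,j))"
    using W S i j by (intro mult_entry[where a=N and b=N]) auto
  also have "\<dots> = (\<Sum>l<N. (\<Sum>k<N. W $$ (k,i) * S $$ (k,l)) * W $$ (l,j))"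
    using W S i j by (intro sum.cong refl, subst mult_entry[where a=N and b=N]) auto
  also have "\<dots> = (\<Sum>k<N. \<Sum>l<N. W $$ (k,i) * S $$ (k,l) * W $$ (l,j))"
    by (simp add: sum_distrib_right) (rule sum.swap)
  finally show ?thesis .
qed

lemma spectral_sorted:
  fixes S :: "real mat"
  assumes "S \<in> carrier_mat n n" "transpose_mat S = S"
  shows "\<exists>Q d. Q \<in> carrier_mat n n \<and> transpose_mat Q * Q = 1\<^sub>m n \<and>
     S = Q * diagm n d * transpose_mat Q \<and> (\<forall>i j. i \<le> j \<longrightarrow> j < n \<longrightarrow> d j \<le> d i)"
  using assms
proof (induction n arbitrary: S)
  case 0
  have "S = 1\<^sub>m 0 * diagm 0 (\<lambda>_. 0) * transpose_mat (1\<^sub>m 0)"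
    using 0 by (intro eq_matI) auto
  thus ?case by force
next
  case (Suc n S)
  define N where "N = Suc n"
  have S: "S \<in> carrier_mat N N" and sym: "transpose_mat S = S" using Suc.prems N_def by auto
  have symij: "S $$ (i,j) = S $$ (j,i)" if "i < N" "j < N" for i j
    using arg_cong[OF sym, of "\<lambda>M. M $$ (j,i)"] that S by auto
  define R where "R = {e. eigenvalue S e}"
  have cN: "\<And>X Y. X \<in> carrier_mat N N \<Longrightarrow> Y \<in> carrier_mat N N \<Longrightarrow> X * Y \<in> carrier_mat N N"
    by auto
  have finR: "finite R" unfolding R_def using card_finite_spectrum(1)[OF S] unfolding spectrum_def .
  obtain e0 v0 where "v0 \<in> carrier_vec N" "v0 \<noteq> 0\<^sub>v N" "S *\<^sub>v v0 = e0 \<cdot>\<^sub>v v0"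
    using sym_real_eigen[OF S sym] N_def by auto
  hence "e0 \<in> R" unfolding R_def eigenvalue_def eigenvector_def using S by auto
  hence Rne: "R \<noteq> {}" by auto
  define lam where "lam = Max R"
  have lamR: "lam \<in> R" unfolding lam_def using finR Rne by simp
  have lam_max: "e \<le> lam" if "eigenvalue S e" for e unfolding lam_def using finR that R_def by simp
  obtain v1 where v1: "v1 \<in> carrier_vec N" "v1 \<noteq> 0\<^sub>v N" "S *\<^sub>v v1 = lam \<cdot>\<^sub>v v1"
    using lamR unfolding R_def eigenvalue_def eigenvector_def using S by auto
  have nv1: "vnorm v1 > 0" using vnorm_zero_iff[OF v1(1)] v1(2) vnorm_nonneg[of v1] by auto
  define v where "v = (1 / vnorm v1) \<cdot>\<^sub>v v1"
  have v: "v \<in> carrier_vec N" unfolding v_def using v1 by simp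
  have Sv: "S *\<^sub>v v = lam \<cdot>\<^sub>v v" unfolding v_def using v1 S
    by (simp add: mult_mat_vec smult_smult_assoc mult.commute)
  have v1n: "(\<Sum>i<N. v $ i * v $ i) = 1"
  proof -
    have "vnorm v = 1" unfolding v_def vnorm_smult using nv1 by simp
    hence "v \<bullet> v = 1" using vnorm_sq[of v] by simp
    thus ?thesis using dot_sum[OF v] by simp
  qed
  have Svi: "(\<Sum>l<N. S $$ (k,l) * v $ l) = lam * v $ k" if "k < N" for k
  proof -
    have "(S *\<^sub>v v) $ k = (\<Sum>l<N. S $$ (k,l) * v $ l)" using S v that by (intro mv_entry) auto
    thus ?thesis using Sv v that by simp
  qed
  define Q0 where "Q0 = mat N 1 (\<lambda>(i,j). v $ i)"
  have Q0: "Q0 \<in> carrier_mat N 1" unfolding Q0_def by simp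
  have "transpose_mat Q0 * Q0 = 1\<^sub>m 1"
  proof (rule eq_matI)
    fix i j assume "i < dim_row (1\<^sub>m 1)" "j < dim_col (1\<^sub>m (1::nat))"
    hence ij: "i = 0" "j = 0" by auto
    have "(transpose_mat Q0 * Q0) $$ (0,0) = (\<Sum>k<N. transpose_mat Q0 $$ (0,k) * Q0 $$ (k,0))"
      using Q0 by (intro mult_entry[where a=1 and b=N]) auto
    also have "\<dots> = (\<Sum>k<N. v $ k * v $ k)" unfolding Q0_def by (intro sum.cong) auto
    also have "\<dots> = 1" by (rule v1n)
    finally show "(transpose_mat Q0 * Q0) $$ (i,j) = 1\<^sub>m 1 $$ (i,j)" using ij by simp
  qed (use Q0 in auto)
  then obtain W where W: "W \<in> carrier_mat N N" "transpose_mat W * W = 1\<^sub>m N"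
    and W0: "\<And>i. i < N \<Longrightarrow> W $$ (i,0) = v $ i"
    using complete_orth[OF Q0] N_def unfolding Q0_def by fastforce
  have WW: "W * transpose_mat W = 1\<^sub>m N" using orth_right[OF W] .
  have Wo: "(\<Sum>k<N. W $$ (k,i) * W $$ (k,j)) = (if i = j then 1 else 0)" if "i < N" "j < N" for i j
    using orth_entry[OF W that] .
  define S' where "S' = transpose_mat W * S * W"
  have S'c: "S' \<in> carrier_mat N N" unfolding S'_def using W S by auto
  have S'e: "S' $$ (i,j) = (\<Sum>k<N. \<Sum>l<N. W $$ (k,i) * S $$ (k,l) * W $$ (l,j))" if "i < N" "j < N" for i j
    unfolding S'_def using triple_entry[OF W(1) S that] .
  have S'sym: "S' $$ (i,j) = S' $$ (j,i)" if "i < N" "j < N" for i j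
  proof -
    have "S' $$ (i,j) = (\<Sum>l<N. \<Sum>k<N. W $$ (k,i) * S $$ (k,l) * W $$ (l,j))"
      by (subst S'e[OF that], rule sum.swap)
    also have "\<dots> = S' $$ (j,i)" using S'e[OF that(2,1)]
      by (simp, intro sum.cong refl) (simp add: symij ac_simps)
    finally show ?thesis .
  qed
  have S'col: "S' $$ (i,0) = (if i = 0 then lam else 0)" if i: "i < N" for i
  proof -
    have N0: "0 < N" unfolding N_def by simp
    have "S' $$ (i,0) = (\<Sum>k<N. \<Sum>l<N. W $$ (k,i) * (S $$ (k,l) * v $ l))"
      unfolding S'e[OF i N0] by (intro sum.cong refl) (simp add: W0 mult.assoc)
    also have "\<dots> = (\<Sum>k<N. W $$ (k,i) * (\<Sum>l<N. S $$ (k,l) * v $ l))"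
      by (simp add: sum_distrib_left)
    finally have "S' $$ (i,0) = (\<Sum>k<N. W $$ (k,i) * (\<Sum>l<N. S $$ (k,l) * v $ l))" .
    also have "\<dots> = (\<Sum>k<N. W $$ (k,i) * (lam * W $$ (k,0)))"
      by (intro sum.cong refl) (simp add: Svi W0)
    also have "\<dots> = lam * (\<Sum>k<N. W $$ (k,i) * W $$ (k,0))"
      by (simp add: sum_distrib_left ac_simps)
    also have "\<dots> = (if i = 0 then lam else 0)" using Wo[OF i] N_def by simp
    finally show ?thesis .
  qed
  have S'row: "S' $$ (0,j) = (if j = 0 then lam else 0)" if j: "j < N" for j
    using S'sym[OF j] S'col[OF j] N_def by simp
  define S3 where "S3 = mat n n (\<lambda>(i,j). S' $$ (Suc i, Suc j))"
  have S3: "S3 \<in> carrier_mat n n" unfolding S3_def by simp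
  have S3sym: "transpose_mat S3 = S3"
    by (rule eq_matI) (auto simp: S3_def N_def intro: S'sym)
  obtain Q3 d3 where Q3: "Q3 \<in> carrier_mat n n" "transpose_mat Q3 * Q3 = 1\<^sub>m n"
    and S3Q: "S3 = Q3 * diagm n d3 * transpose_mat Q3"
    and d3s: "\<And>i j. i \<le> j \<Longrightarrow> j < n \<Longrightarrow> d3 j \<le> d3 i"
    using Suc.IH[OF S3 S3sym] by blast
  have S3e: "S' $$ (Suc i, Suc j) = (\<Sum>k<n. Q3 $$ (i,k) * d3 k * Q3 $$ (j,k))" if "i < n" "j < n" for i j
  proof -
    have "S' $$ (Suc i, Suc j) = S3 $$ (i,j)" using that unfolding S3_def by simp
    also have "\<dots> = (\<Sum>k<n. Q3 $$ (i,k) * d3 k * Q3 $$ (j,k))"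
      unfolding S3Q using quad_entry[OF Q3(1) that] .
    finally show ?thesis .
  qed
  have Q3o: "(\<Sum>k<n. Q3 $$ (k,i) * Q3 $$ (k,j)) = (if i = j then 1 else 0)" if "i < n" "j < n" for i j
    using orth_entry[OF Q3 that] .
  define B where "B = mat N N (\<lambda>(i,j). if i = 0 then (if j = 0 then 1 else 0)
                                   else if j = 0 then 0 else Q3 $$ (i - 1, j - 1))"
  define d where "d = (\<lambda>i. if i = 0 then lam else d3 (i - 1))"
  have B: "B \<in> carrier_mat N N" unfolding B_def by simp
  have BB: "transpose_mat B * B = 1\<^sub>m N"
  proof (rule eq_matI)
    fix i j assume "i < dim_row (1\<^sub>m N)" "j < dim_col (1\<^sub>m N)"
    hence ij: "i < N" "j < N" by auto
    have "(transpose_mat B * B) $$ (i,j) = (\<Sum>k<N. B $$ (k,i) * B $$ (k,j))"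
      using B ij by (subst mult_entry[where a=N and b=N]) auto
    also have "\<dots> = B $$ (0,i) * B $$ (0,j) + (\<Sum>k<n. B $$ (Suc k,i) * B $$ (Suc k,j))"
      unfolding N_def sum.lessThan_Suc_shift ..
    also have "\<dots> = 1\<^sub>m N $$ (i,j)"
    proof (cases i)
      case 0 thus ?thesis using ij unfolding B_def N_def by auto
    next
      case (Suc i')
      show ?thesis
      proof (cases j)
        case 0 thus ?thesis using ij Suc unfolding B_def N_def by auto
      next
        case (Suc j')
        have "(\<Sum>k<n. B $$ (Suc k,i) * B $$ (Suc k,j)) = (\<Sum>k<n. Q3 $$ (k,i') * Q3 $$ (k,j'))"
          using ij Suc \<open>i = Suc i'\<close> unfolding B_def N_def by (intro sum.cong) auto
        thus ?thesis using Q3o[of i' j'] ij Suc \<open>i = Suc i'\<close> unfolding B_def N_def by auto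
      qed
    qed
    finally show "(transpose_mat B * B) $$ (i,j) = 1\<^sub>m N $$ (i,j)" .
  qed (use B in auto)
  have S'B: "S' = B * diagm N d * transpose_mat B"
  proof (rule eq_matI)
    fix i j assume "i < dim_row (B * diagm N d * transpose_mat B)" "j < dim_col (B * diagm N d * transpose_mat B)"
    hence ij: "i < N" "j < N" using B by auto
    have "(B * diagm N d * transpose_mat B) $$ (i,j) = (\<Sum>k<N. B $$ (i,k) * d k * B $$ (j,k))"
      using quad_entry[OF B ij] .
    also have "\<dots> = B $$ (i,0) * d 0 * B $$ (j,0) + (\<Sum>k<n. B $$ (i,Suc k) * d (Suc k) * B $$ (j,Suc k))"
      unfolding N_def sum.lessThan_Suc_shift ..
    also have "\<dots> = S' $$ (i,j)"
    proof (cases i)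
      case 0 thus ?thesis using ij S'row[of j] unfolding B_def N_def d_def by auto
    next
      case (Suc i')
      show ?thesis
      proof (cases j)
        case 0 thus ?thesis using ij Suc S'col[of i] unfolding B_def N_def by auto
      next
        case (Suc j')
        have "(\<Sum>k<n. B $$ (i,Suc k) * d (Suc k) * B $$ (j,Suc k)) = (\<Sum>k<n. Q3 $$ (i',k) * d3 k * Q3 $$ (j',k))"
          using ij Suc \<open>i = Suc i'\<close> unfolding B_def N_def d_def by (intro sum.cong) auto
        thus ?thesis using S3e[of i' j'] ij Suc \<open>i = Suc i'\<close> unfolding B_def N_def by auto
      qed
    qed
    finally show "S' $$ (i,j) = (B * diagm N d * transpose_mat B) $$ (i,j)" by simp
  qed (use B S'c in auto)
  define Q where "Q = W * B"
  have Q: "Q \<in> carrier_mat N N" unfolding Q_def using W B by simp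
  have QQ: "transpose_mat Q * Q = 1\<^sub>m N"
  proof -
    have "transpose_mat Q * Q = transpose_mat B * (transpose_mat W * W) * B"
      unfolding Q_def using W(1) B by (simp add: transpose_mult[of W N N B N] assoc_mult_mat[of _ N N _ N _ N])
    also have "\<dots> = transpose_mat B * B" using W B by simp
    finally show ?thesis using BB by simp
  qed
  have SWS: "S = W * S' * transpose_mat W"
  proof -
    have "W * S' * transpose_mat W = (W * transpose_mat W) * S * (W * transpose_mat W)"
      unfolding S'_def using W(1) S by (simp add: assoc_mult_mat[of _ N N _ N _ N])
    thus ?thesis using WW S by simp
  qed
  have SQ: "S = Q * diagm N d * transpose_mat Q"
  proof -
    have "Q * diagm N d * transpose_mat Q = W * (B * diagm N d * transpose_mat B) * transpose_mat W"
      unfolding Q_def using W(1) B by (simp add: transpose_mult[of W N N B N] cN assoc_mult_mat[of _ N N _ N _ N])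
    thus ?thesis using SWS S'B by simp
  qed
  have dsort: "d j \<le> d i" if "i \<le> j" "j < N" for i j
  proof (cases "i = 0")
    case False
    thus ?thesis using that d3s[of "i - 1" "j - 1"] unfolding d_def N_def by auto
  next
    case True
    show ?thesis
    proof (cases "j = 0")
      case True thus ?thesis using \<open>i = 0\<close> by simp
    next
      case False
      hence n0: "0 < n" using that N_def by simp
      have d3le: "d3 (j - 1) \<le> d3 0" using d3s[of 0 "j - 1"] that N_def False by simp
      define z' where "z' = vec N (\<lambda>i. if i = 0 then 0 else Q3 $$ (i - 1, 0))"
      have z': "z' \<in> carrier_vec N" unfolding z'_def by simp
      have S'z: "S' *\<^sub>v z' = d3 0 \<cdot>\<^sub>v z'"
      proof (rule eq_vecI)
        fix i assume "i < dim_vec (d3 0 \<cdot>\<^sub>v z')"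
        hence i: "i < N" unfolding z'_def by simp
        have "(S' *\<^sub>v z') $ i = (\<Sum>k<N. S' $$ (i,k) * z' $ k)" using S'c z' i by (intro mv_entry) auto
        also have "\<dots> = S' $$ (i,0) * z' $ 0 + (\<Sum>k<n. S' $$ (i,Suc k) * z' $ Suc k)"
          unfolding N_def sum.lessThan_Suc_shift ..
        also have "\<dots> = (\<Sum>k<n. S' $$ (i,Suc k) * Q3 $$ (k, 0))"
          unfolding z'_def N_def by simp
        also have "\<dots> = (d3 0 \<cdot>\<^sub>v z') $ i"
        proof (cases i)
          case 0 thus ?thesis using S'row N_def z'_def by simp
        next
          case (Suc i')
          have i': "i' < n" using i Suc N_def by simp
          have "(\<Sum>k<n. S' $$ (i,Suc k) * Q3 $$ (k, 0)) = (\<Sum>k<n. (\<Sum>l<n. Q3 $$ (i',l) * d3 l * Q3 $$ (k,l)) * Q3 $$ (k, 0))"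
            using S3e i' Suc by (intro sum.cong) auto
          also have "\<dots> = (\<Sum>k<n. \<Sum>l<n. Q3 $$ (i',l) * d3 l * (Q3 $$ (k,l) * Q3 $$ (k, 0)))"
            by (simp add: sum_distrib_right sum_distrib_left ac_simps)
          also have "\<dots> = (\<Sum>l<n. \<Sum>k<n. Q3 $$ (i',l) * d3 l * (Q3 $$ (k,l) * Q3 $$ (k, 0)))"
            by (rule sum.swap)
          also have "\<dots> = (\<Sum>l<n. Q3 $$ (i',l) * d3 l * (\<Sum>k<n. Q3 $$ (k,l) * Q3 $$ (k, 0)))"
            by (simp add: sum_distrib_left)
          also have "\<dots> = (\<Sum>l<n. if l = 0 then Q3 $$ (i',0) * d3 0 else 0)"
            using Q3o n0 by (intro sum.cong) auto
          also have "\<dots> = Q3 $$ (i',0) * d3 0" using n0 by simp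
          finally show ?thesis using Suc i unfolding z'_def by simp
        qed
        finally show "(S' *\<^sub>v z') $ i = (d3 0 \<cdot>\<^sub>v z') $ i" .
      qed (use S'c z' in auto)
      define z where "z = W *\<^sub>v z'"
      have zc: "z \<in> carrier_vec N" unfolding z_def using W z' by simp
      have SW: "S * W = W * S'"
      proof -
        have "W * S' = (W * transpose_mat W) * S * W"
          unfolding S'_def using W(1) S by (simp add: assoc_mult_mat[of _ N N _ N _ N])
        thus ?thesis using WW S by simp
      qed
      have Sz: "S *\<^sub>v z = d3 0 \<cdot>\<^sub>v z"
      proof -
        have "S *\<^sub>v z = (S * W) *\<^sub>v z'" unfolding z_def using S W z' by simp
        also have "\<dots> = W *\<^sub>v (S' *\<^sub>v z')" unfolding SW using W S'c z' by simp
        also have "\<dots> = d3 0 \<cdot>\<^sub>v z" unfolding S'z z_def using W z' by (simp add: mult_mat_vec)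
        finally show ?thesis .
      qed
      have "z' \<noteq> 0\<^sub>v N"
      proof
        assume "z' = 0\<^sub>v N"
        hence "Q3 $$ (k,0) = 0" if "k < n" for k
        proof -
          have "z' $ Suc k = 0" using \<open>z' = 0\<^sub>v N\<close> that N_def by simp
          thus ?thesis using that unfolding z'_def N_def by simp
        qed
        hence "(\<Sum>k<n. Q3 $$ (k,0) * Q3 $$ (k,0)) = 0" by simp
        thus False using Q3o[of 0 0] n0 by simp
      qed
      hence "vnorm z' \<noteq> 0" using vnorm_zero_iff[OF z'] by simp
      hence "z \<noteq> 0\<^sub>v N" using orth_vnorm[OF W z'] vnorm_zero_iff[OF zc] unfolding z_def by simp
      hence "eigenvalue S (d3 0)" unfolding eigenvalue_def eigenvector_def using zc Sz S by auto
      hence "d3 0 \<le> lam" by (rule lam_max)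
      thus ?thesis using d3le \<open>i = 0\<close> False unfolding d_def by simp
    qed
  qed
  show ?case using Q QQ SQ dsort unfolding N_def by blast
qed

lemma svd_exists_square:
  fixes M :: "real mat"
  assumes M: "M \<in> carrier_mat r r"
  shows "\<exists>U S V. is_svd M U S V"
proof -
  have cN: "\<And>X Y. X \<in> carrier_mat r r \<Longrightarrow> Y \<in> carrier_mat r r \<Longrightarrow> X * Y \<in> carrier_mat r r"
    by auto
  define G where "G = transpose_mat M * M"
  have G: "G \<in> carrier_mat r r" unfolding G_def using M by simp
  have Gsym: "transpose_mat G = G" unfolding G_def using M by (simp add: transpose_mult[of _ r r M r])
  obtain Q d where Q: "Q \<in> carrier_mat r r" "transpose_mat Q * Q = 1\<^sub>m r"
    and GQ: "G = Q * diagm r d * transpose_mat Q"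
    and ds: "\<And>i j. i \<le> j \<Longrightarrow> j < r \<Longrightarrow> d j \<le> d i"
    using spectral_sorted[OF G Gsym] by blast
  have QQ': "Q * transpose_mat Q = 1\<^sub>m r" using orth_right[OF Q] .
  define P where "P = M * Q"
  have P: "P \<in> carrier_mat r r" unfolding P_def using M Q by simp
  have PP: "transpose_mat P * P = diagm r d"
  proof -
    have "transpose_mat P * P = transpose_mat Q * G * Q"
      unfolding P_def G_def using M Q(1) by (simp add: transpose_mult[of M r r Q r] cN assoc_mult_mat[of _ r r _ r _ r])
    also have "\<dots> = (transpose_mat Q * Q) * diagm r d * (transpose_mat Q * Q)"
      unfolding GQ using Q(1) by (simp add: cN assoc_mult_mat[of _ r r _ r _ r])
    finally show ?thesis using Q by simp
  qed
  have Pe: "(\<Sum>k<r. P $$ (k,i) * P $$ (k,j)) = (if i = j then d i else 0)" if "i < r" "j < r" for i j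
  proof -
    have "(transpose_mat P * P) $$ (i,j) = (\<Sum>k<r. transpose_mat P $$ (i,k) * P $$ (k,j))"
      using P that by (intro mult_entry[where a=r and b=r]) auto
    thus ?thesis using PP P that by (auto simp: diagm_def)
  qed
  have dnn: "d i \<ge> 0" if "i < r" for i
  proof -
    have "0 \<le> (\<Sum>k<r. P $$ (k,i) * P $$ (k,i))" by (intro sum_nonneg) simp
    thus ?thesis using Pe[OF that that] by simp
  qed
  define k where "k = (LEAST i. i = r \<or> (i < r \<and> d i \<le> 0))"
  have kr: "k \<le> r" unfolding k_def by (rule Least_le) simp
  have dpos: "d i > 0" if "i < k" for i
    using not_less_Least[OF that[unfolded k_def]] kr that by auto
  have dzero: "d i = 0" if "k \<le> i" "i < r" for i
  proof -
    have "k = r \<or> (k < r \<and> d k \<le> 0)" unfolding k_def by (rule LeastI[of _ r]) simp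
    hence "d k \<le> 0" using that by auto
    hence "d i \<le> 0" using ds[OF that(1,2)] by simp
    thus ?thesis using dnn[OF that(2)] by simp
  qed
  define s where "s = (\<lambda>i. sqrt (d i))"
  have ss: "s i * s i = d i" if "i < r" for i using dnn[OF that] unfolding s_def by simp
  have spos: "s i > 0" if "i < k" for i using dpos[OF that] unfolding s_def by simp
  define Q0 where "Q0 = mat r k (\<lambda>(i,j). P $$ (i,j) / s j)"
  have Q0: "Q0 \<in> carrier_mat r k" unfolding Q0_def by simp
  have Q0Q0: "transpose_mat Q0 * Q0 = 1\<^sub>m k"
  proof (rule eq_matI)
    fix i j assume "i < dim_row (1\<^sub>m k)" "j < dim_col (1\<^sub>m k)"
    hence ij: "i < k" "j < k" by auto
    have "(transpose_mat Q0 * Q0) $$ (i,j) = (\<Sum>l<r. transpose_mat Q0 $$ (i,l) * Q0 $$ (l,j))"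
      using Q0 ij by (intro mult_entry[where a=k and b=r]) auto
    also have "\<dots> = (\<Sum>l<r. P $$ (l,i) * P $$ (l,j)) / (s i * s j)"
      using Q0 ij unfolding Q0_def by (auto simp: sum_divide_distrib intro!: sum.cong)
    also have "\<dots> = 1\<^sub>m k $$ (i,j)"
      using Pe[of i j] ij kr ss[of i] spos[of i] by auto
    finally show "(transpose_mat Q0 * Q0) $$ (i,j) = 1\<^sub>m k $$ (i,j)" .
  qed (use Q0 in auto)
  obtain U where U: "U \<in> carrier_mat r r" "transpose_mat U * U = 1\<^sub>m r"
    and UQ0: "\<And>i j. i < r \<Longrightarrow> j < k \<Longrightarrow> U $$ (i,j) = Q0 $$ (i,j)"
    using complete_orth[OF Q0 Q0Q0 kr] by blast
  define Sd where "Sd = diagm r s"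
  have PUS: "P = U * Sd"
  proof (rule eq_matI)
    fix i j assume "i < dim_row (U * Sd)" "j < dim_col (U * Sd)"
    hence ij: "i < r" "j < r" using U unfolding Sd_def by auto
    have "(U * Sd) $$ (i,j) = U $$ (i,j) * s j" unfolding Sd_def using U ij by (simp add: mult_diagm)
    also have "\<dots> = P $$ (i,j)"
    proof (cases "j < k")
      case True thus ?thesis using UQ0[OF ij(1) True] spos[OF True] ij unfolding Q0_def by simp
    next
      case False
      hence dj: "d j = 0" using dzero ij by simp
      have "P $$ (i,j) * P $$ (i,j) \<le> (\<Sum>l<r. P $$ (l,j) * P $$ (l,j))"
        using ij by (intro member_le_sum) auto
      hence "P $$ (i,j) * P $$ (i,j) \<le> 0" using Pe[OF ij(2) ij(2)] dj by simp
      hence "P $$ (i,j) = 0" by (auto simp: mult_le_0_iff)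
      thus ?thesis using dj unfolding s_def by simp
    qed
    finally show "P $$ (i,j) = (U * Sd) $$ (i,j)" ..
  qed (use P U in \<open>auto simp: Sd_def\<close>)
  have MUSQ: "M = U * Sd * transpose_mat Q"
  proof -
    have "M = M * (Q * transpose_mat Q)" using QQ' M by simp
    also have "\<dots> = P * transpose_mat Q" unfolding P_def using M Q(1) by (simp add: cN assoc_mult_mat[of _ r r _ r _ r])
    finally show ?thesis unfolding PUS .
  qed
  have "is_svd M U Sd Q"
    unfolding is_svd_def Let_def
  proof (intro conjI)
    show "diagonal_mat Sd" unfolding diagonal_mat_def Sd_def diagm_def by auto
    show "\<forall>i<min (dim_row M) (dim_col M). 0 \<le> Sd $$ (i, i)"
      using M dnn unfolding Sd_def diagm_def s_def by auto
    show "\<forall>i j. i \<le> j \<and> j < min (dim_row M) (dim_col M) \<longrightarrow> Sd $$ (j, j) \<le> Sd $$ (i, i)"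
      using M ds unfolding Sd_def diagm_def s_def by auto
  qed (use M U Q MUSQ in \<open>auto simp: Sd_def\<close>)
  thus ?thesis by blast
qed

lemma svd_facts:
  fixes B :: "real mat"
  assumes "is_svd B U S V" "B \<in> carrier_mat n m"
  shows "U \<in> carrier_mat n n" "V \<in> carrier_mat m m" "S \<in> carrier_mat n m"
    "transpose_mat U * U = 1\<^sub>m n" "transpose_mat V * V = 1\<^sub>m m"
    "U * transpose_mat U = 1\<^sub>m n" "V * transpose_mat V = 1\<^sub>m m"
    "\<And>i j. i < n \<Longrightarrow> j < m \<Longrightarrow> i \<noteq> j \<Longrightarrow> S $$ (i,j) = 0"
    "\<And>i. i < min n m \<Longrightarrow> 0 \<le> S $$ (i,i)"
    "\<And>i j. i \<le> j \<Longrightarrow> j < min n m \<Longrightarrow> S $$ (j,j) \<le> S $$ (i,i)"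
    "B = U * S * transpose_mat V"
  using assms orth_right[of U n] orth_right[of V m]
  unfolding is_svd_def Let_def diagonal_mat_def by auto

lemma lead_cols_carrier[simp]: "Q \<in> carrier_mat n k \<Longrightarrow> lead_cols Q r \<in> carrier_mat n r"
  unfolding lead_cols_def by auto

lemma lead_cols_dims[simp]: "dim_row (lead_cols Q r) = dim_row Q" "dim_col (lead_cols Q r) = r"
  unfolding lead_cols_def by auto

lemma lead_cols_index[simp]: "i < dim_row Q \<Longrightarrow> j < r \<Longrightarrow> lead_cols Q r $$ (i,j) = Q $$ (i,j)"
  unfolding lead_cols_def by auto

lemma lead_orth:
  fixes Q :: "real mat"
  assumes Q: "Q \<in> carrier_mat n n" and QQ: "transpose_mat Q * Q = 1\<^sub>m n" and r: "r \<le> n"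
  shows "transpose_mat (lead_cols Q r) * lead_cols Q r = 1\<^sub>m r"
proof (rule eq_matI)
  fix i j assume "i < dim_row (1\<^sub>m r)" "j < dim_col (1\<^sub>m r)"
  hence ij: "i < r" "j < r" by auto
  have "(transpose_mat (lead_cols Q r) * lead_cols Q r) $$ (i,j)
      = (\<Sum>k<n. transpose_mat (lead_cols Q r) $$ (i,k) * lead_cols Q r $$ (k,j))"
    using Q ij by (intro mult_entry[where a=r and b=n]) auto
  also have "\<dots> = (\<Sum>k<n. Q $$ (k,i) * Q $$ (k,j))"
    using Q ij by (intro sum.cong) auto
  also have "\<dots> = 1\<^sub>m r $$ (i,j)" using orth_entry[OF Q QQ, of i j] ij r by auto
  finally show "(transpose_mat (lead_cols Q r) * lead_cols Q r) $$ (i,j) = 1\<^sub>m r $$ (i,j)" .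
qed (use Q in auto)

lemma svd_transpose:
  fixes B :: "real mat"
  assumes svd: "is_svd B U S V" and B: "B \<in> carrier_mat n m"
  shows "is_svd (transpose_mat B) V (transpose_mat S) U"
proof -
  note f = svd_facts[OF svd B]
  have "transpose_mat B = V * transpose_mat S * transpose_mat U"
    using f(1-3,11) by (simp add: transpose_mult[of _ n m _ m] transpose_mult[of _ n n _ m] assoc_mult_mat[of _ m n _ n _ n])
  thus ?thesis unfolding is_svd_def Let_def diagonal_mat_def
    using f B by (auto simp: min.commute)
qed

lemma svd_right:
  fixes B :: "real mat"
  assumes svd: "is_svd B U S V" and B: "B \<in> carrier_mat n m" and r: "r \<le> min n m"
  shows "B * lead_cols V r = lead_cols U r * diagm r (\<lambda>j. S $$ (j,j))"
proof -
  note f = svd_facts[OF svd B]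
  have BV: "B * V = U * S"
  proof -
    have "B * V = U * S * (transpose_mat V * V)"
      unfolding f(11) using f(1-3) by (subst assoc_mult_mat[of "U * S" n m _ m _ m]) auto
    thus ?thesis using f by simp
  qed
  show ?thesis
  proof (rule eq_matI)
    fix i j assume "i < dim_row (lead_cols U r * diagm r (\<lambda>j. S $$ (j,j)))"
      "j < dim_col (lead_cols U r * diagm r (\<lambda>j. S $$ (j,j)))"
    hence ij: "i < n" "j < r" using f(1) by auto
    have "(B * lead_cols V r) $$ (i,j) = (\<Sum>k<m. B $$ (i,k) * lead_cols V r $$ (k,j))"
      using B f(2) ij by (intro mult_entry[where a=n and b=m]) auto
    also have "\<dots> = (\<Sum>k<m. B $$ (i,k) * V $$ (k,j))" using f(2) ij by (intro sum.cong) auto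
    also have "\<dots> = (B * V) $$ (i,j)" using B f(2) ij r by (intro mult_entry[where a=n and b=m and c=m, symmetric]) auto
    also have "\<dots> = (\<Sum>k<n. U $$ (i,k) * S $$ (k,j))"
      unfolding BV using f(1,3) ij r by (intro mult_entry[where a=n and b=n and c=m]) auto
    also have "\<dots> = (\<Sum>k<n. if k = j then U $$ (i,j) * S $$ (j,j) else 0)"
      using f(8) ij r by (intro sum.cong) auto
    also have "\<dots> = U $$ (i,j) * S $$ (j,j)" using ij r by simp
    also have "\<dots> = (lead_cols U r * diagm r (\<lambda>j. S $$ (j,j))) $$ (i,j)"
      using f(1) ij r by (simp add: mult_diagm[of _ n r])
    finally show "(B * lead_cols V r) $$ (i,j) = (lead_cols U r * diagm r (\<lambda>j. S $$ (j,j))) $$ (i,j)" .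
  qed (use B f(1,2) in auto)
qed

lemma final_arith:
  fixes lam tau t s E F :: real
  assumes lam: "lam \<ge> 0" and tau: "tau \<ge> t" and ts: "t > s" and s: "s \<ge> 0" and E: "E \<ge> 0" and F: "F \<ge> 0"
    and key: "lam * tau^2 \<le> s^2 * lam + sqrt lam * (s * F + E * tau)"
  shows "sqrt lam \<le> (t * E + s * F) / (t^2 - s^2)"
proof -
  define q where "q = sqrt lam"
  have q: "q \<ge> 0" "q^2 = lam" unfolding q_def using lam by auto
  have t0: "t \<ge> 0" "tau \<ge> 0" "tau > s" using ts s tau by auto
  have "s^2 < t^2" using power_strict_mono[of s t 2] ts s by simp
  hence den: "t^2 - s^2 > 0" by simp
  have "s^2 < tau^2" using power_strict_mono[of s tau 2] t0 s by simp
  hence den2: "tau^2 - s^2 > 0" by simp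
  show ?thesis
  proof (cases "q = 0")
    case True thus ?thesis unfolding q_def using den E F s ts by (simp add: divide_nonneg_pos)
  next
    case False
    hence qp: "q > 0" using q by simp
    have key': "q^2 * tau^2 \<le> s^2 * q^2 + q * (s * F + E * tau)"
      using key lam unfolding q_def by simp
    have "q * (q * (tau^2 - s^2)) \<le> q * (s * F + E * tau)"
      using key' by (simp add: algebra_simps power2_eq_square)
    hence k2: "q * (tau^2 - s^2) \<le> s * F + E * tau" using qp by simp
    have "(s * F + E * tau) * (t^2 - s^2) \<le> (s * F + E * t) * (tau^2 - s^2)"
    proof -
      have "(s * F + E * t) * (tau^2 - s^2) - (s * F + E * tau) * (t^2 - s^2)
          = s * F * (tau^2 - t^2) + E * (tau - t) * (t * tau + s^2)"
        by (simp add: algebra_simps power2_eq_square)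
      moreover have "tau^2 - t^2 \<ge> 0" using power_mono[of t tau 2] tau t0 by simp
      moreover have "t * tau + s^2 \<ge> 0" using t0 by simp
      ultimately have "(s * F + E * t) * (tau^2 - s^2) - (s * F + E * tau) * (t^2 - s^2) \<ge> 0"
        using s F E tau by (simp add: mult_nonneg_nonneg)
      thus ?thesis by simp
    qed
    moreover have "q * (tau^2 - s^2) * (t^2 - s^2) \<le> (s * F + E * tau) * (t^2 - s^2)"
      using mult_right_mono[OF k2, of "t^2 - s^2"] den by simp
    ultimately have "q * (tau^2 - s^2) * (t^2 - s^2) \<le> (s * F + E * t) * (tau^2 - s^2)"
      by linarith
    hence "q * (t^2 - s^2) * (tau^2 - s^2) \<le> (s * F + E * t) * (tau^2 - s^2)"
      by (simp add: ac_simps)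
    hence "q * (t^2 - s^2) \<le> s * F + E * t" using den2 by (rule mult_right_le_imp_le)
    thus ?thesis unfolding q_def[symmetric] using den by (simp add: le_divide_eq algebra_simps)
  qed
qed

lemma sum_if_lt_le:
  fixes f :: "nat \<Rightarrow> real"
  assumes "\<And>j. f j \<ge> 0"
  shows "(\<Sum>j<m. if j < n then f j else 0) \<le> (\<Sum>j<n. f j)"
proof -
  have "(\<Sum>j<m. if j < n then f j else 0) = (\<Sum>j\<in>{..<m} \<inter> {..<n}. f j)"
    using sum.inter_restrict[of "{..<m}" f "{..<n}"] by (simp add: lessThan_def)
  also have "\<dots> \<le> (\<Sum>j<n. f j)" using assms by (intro sum_mono2) auto
  finally show ?thesis .
qed

lemma sum_if_lt_eq:
  fixes f :: "nat \<Rightarrow> real"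
  assumes "r \<le> n"
  shows "(\<Sum>j<n. if j < r then f j else 0) = (\<Sum>j<r. f j)"
proof -
  have "(\<Sum>j<n. if j < r then f j else 0) = (\<Sum>j\<in>{..<n} \<inter> {..<r}. f j)"
    using sum.inter_restrict[of "{..<n}" f "{..<r}"] by (simp add: lessThan_def)
  also have "{..<n} \<inter> {..<r} = {..<r}" using assms by auto
  finally show ?thesis .
qed

lemma diagT_entry:
  fixes S :: "real mat"
  assumes S: "S \<in> carrier_mat n m" and dg: "\<And>i j. i < n \<Longrightarrow> j < m \<Longrightarrow> i \<noteq> j \<Longrightarrow> S $$ (i,j) = 0"
    and q: "q \<in> carrier_vec n" and j: "j < m"
  shows "(transpose_mat S *\<^sub>v q) $ j = (if j < n then S $$ (j,j) * q $ j else 0)"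
proof -
  have "(transpose_mat S *\<^sub>v q) $ j = (\<Sum>i<n. transpose_mat S $$ (j,i) * q $ i)"
    using S q j by (intro mv_entry[where a=m and b=n]) auto
  also have "\<dots> = (\<Sum>i<n. if i = j then S $$ (j,j) * q $ j else 0)"
    using S j dg by (intro sum.cong) auto
  also have "\<dots> = (if j < n then S $$ (j,j) * q $ j else 0)" by simp
  finally show ?thesis .
qed

lemma core:
  fixes A dA U S V Ut St Vt :: "real mat" and x :: "real vec"
  assumes A: "A \<in> carrier_mat n m" and dA: "dA \<in> carrier_mat n m"
    and r1: "1 \<le> r" and rlt: "r < min n m"
    and svdA: "is_svd A U S V" and svdAt: "is_svd (A + dA) Ut St Vt"
    and gap: "S $$ (r,r) < St $$ (r-1,r-1)"
    and E: "E \<ge> 0" "\<And>z. z \<in> carrier_vec r \<Longrightarrow> vnorm (dA *\<^sub>v (lead_cols Vt r *\<^sub>v z)) \<le> E * vnorm z"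
    and F: "F \<ge> 0" "\<And>z. z \<in> carrier_vec r \<Longrightarrow> vnorm (transpose_mat dA *\<^sub>v (lead_cols Ut r *\<^sub>v z)) \<le> F * vnorm z"
    and x: "x \<in> carrier_vec r" "vnorm x = 1"
    and eig: "transpose_mat (transpose_mat (lead_cols U r) * lead_cols Ut r) * (transpose_mat (lead_cols U r) * lead_cols Ut r) *\<^sub>v x = \<mu> \<cdot>\<^sub>v x"
  shows "0 \<le> 1 - \<mu> \<and> sqrt (1 - \<mu>) \<le> (St $$ (r-1,r-1) * E + S $$ (r,r) * F) / ((St $$ (r-1,r-1))^2 - (S $$ (r,r))^2)"
proof -
  define At where "At = A + dA"
  have At: "At \<in> carrier_mat n m" unfolding At_def using A dA by simp
  note fU = svd_facts[OF svdA A]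
  note fT = svd_facts[OF svdAt[folded At_def] At]
  define U1 where "U1 = lead_cols U r"
  define Ut1 where "Ut1 = lead_cols Ut r"
  define Vt1 where "Vt1 = lead_cols Vt r"
  define t where "t = St $$ (r-1,r-1)"
  define s where "s = S $$ (r,r)"
  have rn: "r \<le> n" "r \<le> m" "r < n" "r < m" using rlt by auto
  have U1c: "U1 \<in> carrier_mat n r" unfolding U1_def using fU(1) by simp
  have Ut1c: "Ut1 \<in> carrier_mat n r" unfolding Ut1_def using fT(1) by simp
  have Vt1c: "Vt1 \<in> carrier_mat m r" unfolding Vt1_def using fT(2) by simp
  have Ut1o: "transpose_mat Ut1 * Ut1 = 1\<^sub>m r" unfolding Ut1_def using lead_orth[OF fT(1) fT(4) rn(1)] .
  define D1 where "D1 = diagm r (\<lambda>j. St $$ (j,j))"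
  have D1c: "D1 \<in> carrier_mat r r" unfolding D1_def by simp
  have AV: "At * Vt1 = Ut1 * D1"
    unfolding Vt1_def Ut1_def D1_def using svd_right[OF svdAt[folded At_def] At] rlt by simp
  have AU: "transpose_mat At * Ut1 = Vt1 * D1"
  proof -
    have "transpose_mat At * Ut1 = Vt1 * diagm r (\<lambda>j. transpose_mat St $$ (j,j))"
      unfolding Vt1_def Ut1_def
      using svd_right[OF svd_transpose[OF svdAt[folded At_def] At] transpose_carrier_mat[THEN iffD2, OF At], of r] rlt by simp
    also have "diagm r (\<lambda>j. transpose_mat St $$ (j,j)) = D1"
      unfolding D1_def diagm_def using fT(3) rn by (intro eq_matI) auto
    finally show ?thesis .
  qed
  define y where "y = Ut1 *\<^sub>v x"
  have yc: "y \<in> carrier_vec n" unfolding y_def using Ut1c x by simp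
  define p where "p = transpose_mat U *\<^sub>v y"
  have pc: "p \<in> carrier_vec n" unfolding p_def using fU(1) yc by simp
  define yh where "yh = vec n (\<lambda>i. if i < r then 0 else p $ i)"
  define p1 where "p1 = vec n (\<lambda>i. if i < r then p $ i else 0)"
  have yhc: "yh \<in> carrier_vec n" and p1c: "p1 \<in> carrier_vec n" unfolding yh_def p1_def by auto
  have yhp: "yh = p - p1" unfolding yh_def p1_def using pc by (intro eq_vecI) auto
  define w where "w = U *\<^sub>v yh"
  have wc: "w \<in> carrier_vec n" unfolding w_def using fU(1) yhc by simp
  have Up: "U *\<^sub>v p = y"
  proof -
    have "U *\<^sub>v p = (U * transpose_mat U) *\<^sub>v y" unfolding p_def using fU(1) yc by simp
    thus ?thesis using fU(6) yc by simp
  qed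
  have Uty: "transpose_mat Ut1 *\<^sub>v y = x"
  proof -
    have "transpose_mat Ut1 *\<^sub>v y = (transpose_mat Ut1 * Ut1) *\<^sub>v x" unfolding y_def using Ut1c x by simp
    thus ?thesis using Ut1o x by simp
  qed
  have Up1: "U *\<^sub>v p1 = U1 *\<^sub>v (transpose_mat U1 *\<^sub>v y)"
  proof (rule eq_vecI)
    fix i assume "i < dim_vec (U1 *\<^sub>v (transpose_mat U1 *\<^sub>v y))"
    hence i: "i < n" using U1c by simp
    have pk: "p $ k = (transpose_mat U1 *\<^sub>v y) $ k" if "k < r" for k
    proof -
      have "p $ k = (\<Sum>l<n. transpose_mat U $$ (k,l) * y $ l)"
        unfolding p_def using fU(1) yc that rn by (intro mv_entry[where a=n and b=n]) auto
      also have "\<dots> = (\<Sum>l<n. transpose_mat U1 $$ (k,l) * y $ l)"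
        using fU(1) that rn unfolding U1_def by (intro sum.cong) auto
      also have "\<dots> = (transpose_mat U1 *\<^sub>v y) $ k"
        using U1c yc that by (intro mv_entry[where a=r and b=n, symmetric]) auto
      finally show ?thesis .
    qed
    have "(U *\<^sub>v p1) $ i = (\<Sum>k<n. U $$ (i,k) * p1 $ k)" using fU(1) p1c i by (intro mv_entry[where a=n and b=n]) auto
    also have "\<dots> = (\<Sum>k<n. if k < r then U $$ (i,k) * p $ k else 0)"
      unfolding p1_def by (intro sum.cong) auto
    also have "\<dots> = (\<Sum>k<r. U $$ (i,k) * p $ k)" using sum_if_lt_eq[OF rn(1)] .
    also have "\<dots> = (\<Sum>k<r. U1 $$ (i,k) * (transpose_mat U1 *\<^sub>v y) $ k)"
      using pk i fU(1) unfolding U1_def by (intro sum.cong) auto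
    also have "\<dots> = (U1 *\<^sub>v (transpose_mat U1 *\<^sub>v y)) $ i"
      using U1c yc i by (intro mv_entry[where a=n and b=r, symmetric]) auto
    finally show "(U *\<^sub>v p1) $ i = (U1 *\<^sub>v (transpose_mat U1 *\<^sub>v y)) $ i" .
  qed (use fU(1) U1c p1c in auto)
  have Mx: "transpose_mat Ut1 *\<^sub>v (U *\<^sub>v p1) = \<mu> \<cdot>\<^sub>v x"
  proof -
    have "transpose_mat Ut1 *\<^sub>v (U *\<^sub>v p1) = transpose_mat Ut1 *\<^sub>v (U1 *\<^sub>v (transpose_mat U1 *\<^sub>v (Ut1 *\<^sub>v x)))"
      unfolding Up1 y_def ..
    also have "\<dots> = transpose_mat (transpose_mat U1 * Ut1) * (transpose_mat U1 * Ut1) *\<^sub>v x"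
    proof -
      have c1: "transpose_mat U1 * Ut1 \<in> carrier_mat r r" using U1c Ut1c by simp
      have e1: "transpose_mat (transpose_mat U1 * Ut1) = transpose_mat Ut1 * U1"
        using U1c Ut1c by (simp add: transpose_mult[of _ r n _ r])
      have c2: "transpose_mat Ut1 * U1 \<in> carrier_mat r r" using U1c Ut1c by simp
      have "(transpose_mat Ut1 * U1) * (transpose_mat U1 * Ut1) *\<^sub>v x
          = (transpose_mat Ut1 * U1) *\<^sub>v ((transpose_mat U1 * Ut1) *\<^sub>v x)"
        using c1 c2 x by (intro assoc_mult_mat_vec[of _ r r _ r]) auto
      also have "\<dots> = transpose_mat Ut1 *\<^sub>v (U1 *\<^sub>v (transpose_mat U1 *\<^sub>v (Ut1 *\<^sub>v x)))"
        using U1c Ut1c x by (simp add: assoc_mult_mat_vec[of _ r n _ r] assoc_mult_mat_vec[of _ n r _ r])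
      finally have calc: "(transpose_mat Ut1 * U1) * (transpose_mat U1 * Ut1) *\<^sub>v x
          = transpose_mat Ut1 *\<^sub>v (U1 *\<^sub>v (transpose_mat U1 *\<^sub>v (Ut1 *\<^sub>v x)))" .
      show ?thesis by (subst e1, rule calc[symmetric])
    qed
    finally show ?thesis using eig unfolding U1_def Ut1_def by simp
  qed
  have Utw: "transpose_mat Ut1 *\<^sub>v w = (1 - \<mu>) \<cdot>\<^sub>v x"
  proof -
    have "transpose_mat Ut1 *\<^sub>v w = transpose_mat Ut1 *\<^sub>v (U *\<^sub>v p - U *\<^sub>v p1)"
      unfolding w_def yhp using fU(1) pc p1c by (simp add: mult_minus_distrib_mat_vec)
    also have "\<dots> = transpose_mat Ut1 *\<^sub>v (U *\<^sub>v p) - transpose_mat Ut1 *\<^sub>v (U *\<^sub>v p1)"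
      using Ut1c fU(1) pc p1c by (intro mult_minus_distrib_mat_vec[where nc=n]) auto
    also have "\<dots> = x - \<mu> \<cdot>\<^sub>v x" unfolding Up Uty Mx ..
    also have "\<dots> = (1 - \<mu>) \<cdot>\<^sub>v x" using x by (intro eq_vecI) (auto simp: algebra_simps)
    finally show ?thesis .
  qed
  define lam where "lam = 1 - \<mu>"
  have wdot: "w \<bullet> (Ut1 *\<^sub>v z) = lam * (x \<bullet> z)" if z: "z \<in> carrier_vec r" for z
  proof -
    have "w \<bullet> (Ut1 *\<^sub>v z) = (Ut1 *\<^sub>v z) \<bullet> w" using wc Ut1c z by (intro comm_scalar_prod[of _ n]) auto
    also have "\<dots> = z \<bullet> (transpose_mat Ut1 *\<^sub>v w)" using Ut1c z wc by (intro dot_transpose) auto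
    also have "\<dots> = lam * (x \<bullet> z)" unfolding Utw lam_def using z x by (simp add: comm_scalar_prod[of _ r])
    finally show ?thesis .
  qed
  have yhyh: "yh \<bullet> yh = yh \<bullet> p"
    unfolding scalar_prod_def yh_def using pc by (intro sum.cong) auto
  have lam_eq: "yh \<bullet> yh = lam"
  proof -
    have "yh \<bullet> p = (U *\<^sub>v yh) \<bullet> y" unfolding p_def using fU(1) yhc yc by (intro dot_transpose[symmetric]) auto
    also have "\<dots> = lam * (x \<bullet> x)" unfolding w_def[symmetric] y_def using wdot[OF x(1)] .
    also have "x \<bullet> x = 1" using vnorm_sq[of x] x by simp
    finally show ?thesis using yhyh by simp
  qed
  have lam0: "lam \<ge> 0" using lam_eq dot_self_nonneg[of yh] by simp
  have wn: "vnorm w = sqrt lam" unfolding w_def using orth_vnorm[OF fU(1) fU(4) yhc] lam_eq by (simp add: vnorm_eq_sqrt)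
  define g where "g = D1 *\<^sub>v x"
  have gc: "g \<in> carrier_vec r" unfolding g_def using D1c x by simp
  have g_ent: "g $ j = St $$ (j,j) * x $ j" if j: "j < r" for j
  proof -
    have "g $ j = (\<Sum>k<r. D1 $$ (j,k) * x $ k)" unfolding g_def using D1c x j by (intro mv_entry) auto
    also have "\<dots> = (\<Sum>k<r. if k = j then St $$ (j,j) * x $ j else 0)"
      unfolding D1_def diagm_def using j by (intro sum.cong) auto
    finally show ?thesis using j by simp
  qed
  define tau where "tau = vnorm g"
  have Vg: "Vt1 *\<^sub>v g = transpose_mat A *\<^sub>v y + transpose_mat dA *\<^sub>v y"
  proof -
    have "Vt1 *\<^sub>v g = (Vt1 * D1) *\<^sub>v x" unfolding g_def using Vt1c D1c x by simp
    also have "\<dots> = transpose_mat At *\<^sub>v y" unfolding AU[symmetric] y_def using At Ut1c x by simp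
    also have "\<dots> = transpose_mat A *\<^sub>v y + transpose_mat dA *\<^sub>v y"
      unfolding At_def using A dA yc by (simp add: transpose_add add_mult_distrib_mat_vec[of _ m n])
    finally show ?thesis .
  qed
  have main: "Ut1 *\<^sub>v (D1 *\<^sub>v g) = A *\<^sub>v (transpose_mat A *\<^sub>v y) + A *\<^sub>v (transpose_mat dA *\<^sub>v y) + dA *\<^sub>v (Vt1 *\<^sub>v g)"
  proof -
    have "Ut1 *\<^sub>v (D1 *\<^sub>v g) = (Ut1 * D1) *\<^sub>v g" using Ut1c D1c gc by simp
    also have "\<dots> = At *\<^sub>v (Vt1 *\<^sub>v g)" unfolding AV[symmetric] using At Vt1c gc by simp
    also have "\<dots> = A *\<^sub>v (Vt1 *\<^sub>v g) + dA *\<^sub>v (Vt1 *\<^sub>v g)"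
      unfolding At_def using A dA Vt1c gc by (simp add: add_mult_distrib_mat_vec[of _ n m])
    also have "A *\<^sub>v (Vt1 *\<^sub>v g) = A *\<^sub>v (transpose_mat A *\<^sub>v y) + A *\<^sub>v (transpose_mat dA *\<^sub>v y)"
      unfolding Vg using A dA yc by (simp add: mult_add_distrib_mat_vec[of _ n m])
    finally show ?thesis .
  qed
  have ATc: "transpose_mat A = V * transpose_mat S * transpose_mat U"
    using fU(1-3) by (subst fU(11)) (simp add: transpose_mult[of _ n m _ m] transpose_mult[of _ n n _ m] assoc_mult_mat[of _ m n _ n _ n])
  define a where "a = transpose_mat S *\<^sub>v yh"
  define b where "b = transpose_mat S *\<^sub>v p"
  have ac: "a \<in> carrier_vec m" and bc: "b \<in> carrier_vec m" unfolding a_def b_def using fU(3) yhc pc by auto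
  have ATw: "transpose_mat A *\<^sub>v w = V *\<^sub>v a"
  proof -
    have "transpose_mat A *\<^sub>v w = V *\<^sub>v (transpose_mat S *\<^sub>v (transpose_mat U *\<^sub>v (U *\<^sub>v yh)))"
      unfolding ATc w_def using fU(1-3) yhc
      by (simp add: assoc_mult_mat_vec[of _ m n _ n] assoc_mult_mat_vec[of _ m m _ n])
    also have "transpose_mat U *\<^sub>v (U *\<^sub>v yh) = yh"
      using fU(1,4) yhc by (simp flip: assoc_mult_mat_vec[of _ n n _ n])
    finally show ?thesis unfolding a_def .
  qed
  have ATy: "transpose_mat A *\<^sub>v y = V *\<^sub>v b"
    unfolding ATc b_def p_def using fU(1-3) yc
    by (simp add: assoc_mult_mat_vec[of _ m n _ n] assoc_mult_mat_vec[of _ m m _ n])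
  have a_ent: "a $ j = (if j < n then S $$ (j,j) * yh $ j else 0)" if "j < m" for j
    unfolding a_def using diagT_entry[OF fU(3) fU(8) yhc that] .
  have b_ent: "b $ j = (if j < n then S $$ (j,j) * p $ j else 0)" if "j < m" for j
    unfolding b_def using diagT_entry[OF fU(3) fU(8) pc that] .
  have ba: "b \<bullet> a = a \<bullet> a"
    unfolding dot_sum[OF ac] using a_ent b_ent
    by (intro sum.cong refl) (auto simp: yh_def)
  have s0: "0 \<le> s" unfolding s_def using fU(9)[of r] rlt by simp
  have aa: "a \<bullet> a \<le> s^2 * lam"
  proof -
    have "a \<bullet> a = (\<Sum>j<m. (a $ j)^2)" using dot_self[of a] ac by simp
    also have "\<dots> \<le> (\<Sum>j<m. if j < n then s^2 * (yh $ j)^2 else 0)"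
    proof (rule sum_mono)
      fix j assume "j \<in> {..<m}"
      hence j: "j < m" by simp
      show "(a $ j)^2 \<le> (if j < n then s^2 * (yh $ j)^2 else 0)"
      proof (cases "j < n")
        case True
        show ?thesis
        proof (cases "j < r")
          case True thus ?thesis using a_ent[OF j] \<open>j < n\<close> by (simp add: yh_def)
        next
          case False
          have "S $$ (j,j) \<le> s" unfolding s_def using fU(10)[of r j] False j \<open>j < n\<close> by simp
          moreover have "0 \<le> S $$ (j,j)" using fU(9)[of j] j \<open>j < n\<close> by simp
          ultimately have "(S $$ (j,j))^2 \<le> s^2" by (simp add: power_mono)
          hence "(S $$ (j,j))^2 * (yh $ j)^2 \<le> s^2 * (yh $ j)^2" by (simp add: mult_right_mono)
          thus ?thesis using a_ent[OF j] \<open>j < n\<close> by (simp add: power_mult_distrib)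
        qed
      next
        case False thus ?thesis using a_ent[OF j] by simp
      qed
    qed
    also have "\<dots> \<le> (\<Sum>j<n. s^2 * (yh $ j)^2)" by (rule sum_if_lt_le) simp
    also have "\<dots> = s^2 * (yh \<bullet> yh)" using dot_self[of yh] yhc by (simp add: sum_distrib_left)
    finally show ?thesis using lam_eq by simp
  qed
  have an: "vnorm a \<le> s * sqrt lam"
  proof -
    have "vnorm a = sqrt (a \<bullet> a)" by (rule vnorm_eq_sqrt)
    also have "\<dots> \<le> sqrt (s^2 * lam)" using aa by simp
    also have "\<dots> = s * sqrt lam" using s0 by (simp add: real_sqrt_mult)
    finally show ?thesis .
  qed
  have ATwn: "vnorm (transpose_mat A *\<^sub>v w) = vnorm a" unfolding ATw using orth_vnorm[OF fU(2) fU(5) ac] .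
  have dAy: "vnorm (transpose_mat dA *\<^sub>v y) \<le> F" using F(2)[OF x(1)] x(2) unfolding y_def Ut1_def by simp
  have Dg: "D1 *\<^sub>v g \<in> carrier_vec r" using D1c gc by simp
  have D1T: "transpose_mat D1 = D1" unfolding D1_def diagm_def by (intro eq_matI) auto
  have LHS: "w \<bullet> (Ut1 *\<^sub>v (D1 *\<^sub>v g)) = lam * (g \<bullet> g)"
  proof -
    have "x \<bullet> (D1 *\<^sub>v g) = (D1 *\<^sub>v g) \<bullet> x" using x Dg by (intro comm_scalar_prod[of _ r]) auto
    also have "\<dots> = g \<bullet> (transpose_mat D1 *\<^sub>v x)" using D1c gc x by (intro dot_transpose) auto
    finally show ?thesis unfolding wdot[OF Dg] D1T g_def[symmetric] by simp
  qed
  have AAy: "A *\<^sub>v (transpose_mat A *\<^sub>v y) \<in> carrier_vec n" "A *\<^sub>v (transpose_mat dA *\<^sub>v y) \<in> carrier_vec n"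
    "dA *\<^sub>v (Vt1 *\<^sub>v g) \<in> carrier_vec n" using A dA Vt1c gc yc by auto
  have T1: "w \<bullet> (A *\<^sub>v (transpose_mat A *\<^sub>v y)) = a \<bullet> a"
  proof -
    have "w \<bullet> (A *\<^sub>v (transpose_mat A *\<^sub>v y)) = (A *\<^sub>v (transpose_mat A *\<^sub>v y)) \<bullet> w"
      using wc AAy by (intro comm_scalar_prod[of _ n]) auto
    also have "\<dots> = (transpose_mat A *\<^sub>v y) \<bullet> (transpose_mat A *\<^sub>v w)" using A yc wc by (intro dot_transpose) auto
    also have "\<dots> = b \<bullet> a" unfolding ATw ATy using orth_dot[OF fU(2) fU(5) bc ac] .
    finally show ?thesis using ba by simp
  qed
  have T2: "w \<bullet> (A *\<^sub>v (transpose_mat dA *\<^sub>v y)) \<le> F * (s * sqrt lam)"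
  proof -
    have "w \<bullet> (A *\<^sub>v (transpose_mat dA *\<^sub>v y)) = (A *\<^sub>v (transpose_mat dA *\<^sub>v y)) \<bullet> w"
      using wc AAy by (intro comm_scalar_prod[of _ n]) auto
    also have "\<dots> = (transpose_mat dA *\<^sub>v y) \<bullet> (transpose_mat A *\<^sub>v w)" using A dA yc wc by (intro dot_transpose) auto
    also have "\<dots> \<le> vnorm (transpose_mat dA *\<^sub>v y) * vnorm (transpose_mat A *\<^sub>v w)"
      using A dA yc wc by (intro cauchy_schwarz[of _ m]) auto
    also have "\<dots> \<le> F * (s * sqrt lam)" unfolding ATwn
      using dAy an F(1) by (intro mult_mono) (auto simp: vnorm_nonneg)
    finally show ?thesis .
  qed
  have T3: "w \<bullet> (dA *\<^sub>v (Vt1 *\<^sub>v g)) \<le> sqrt lam * (E * tau)"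
  proof -
    have "w \<bullet> (dA *\<^sub>v (Vt1 *\<^sub>v g)) \<le> vnorm w * vnorm (dA *\<^sub>v (Vt1 *\<^sub>v g))"
      using wc AAy by (intro cauchy_schwarz[of _ n]) auto
    also have "\<dots> \<le> sqrt lam * (E * tau)" unfolding wn tau_def
      using E(2)[OF gc] unfolding Vt1_def using lam0 by (intro mult_left_mono) auto
    finally show ?thesis .
  qed
  have keyeq: "lam * (g \<bullet> g) = w \<bullet> (A *\<^sub>v (transpose_mat A *\<^sub>v y)) + w \<bullet> (A *\<^sub>v (transpose_mat dA *\<^sub>v y)) + w \<bullet> (dA *\<^sub>v (Vt1 *\<^sub>v g))"
    unfolding LHS[symmetric] main using wc AAy
    by (simp add: scalar_prod_add_distrib[of _ n])
  have tau2: "tau^2 = g \<bullet> g" unfolding tau_def by (rule vnorm_sq)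
  have key: "lam * tau^2 \<le> s^2 * lam + sqrt lam * (s * F + E * tau)"
    using keyeq T1 T2 T3 aa unfolding tau2 by (simp add: algebra_simps)
  have t0: "s < t" using gap unfolding s_def t_def .
  have tau_t: "tau \<ge> t"
  proof -
    have tj: "t \<le> St $$ (j,j)" if "j < r" for j
    proof -
      have "j \<le> r - 1" "r - 1 < min n m" using that rlt by auto
      thus ?thesis unfolding t_def by (rule fT(10))
    qed
    have tnn: "0 \<le> t" using t0 s0 by simp
    have "g \<bullet> g = (\<Sum>j<r. (St $$ (j,j))^2 * (x $ j)^2)"
      using dot_self[of g] gc g_ent by (simp add: power_mult_distrib)
    also have "\<dots> \<ge> (\<Sum>j<r. t^2 * (x $ j)^2)"
      using tj tnn by (intro sum_mono mult_right_mono power_mono) auto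
    moreover have "(\<Sum>j<r. t^2 * (x $ j)^2) = t^2"
      using dot_self[of x] vnorm_sq[of x] x by (simp add: sum_distrib_left[symmetric])
    ultimately have "t^2 \<le> tau^2" unfolding tau2 by simp
    thus ?thesis using tnn tau_def vnorm_nonneg[of g] by (simp add: power2_le_iff_abs_le)
  qed
  have "sqrt lam \<le> (t * E + s * F) / (t^2 - s^2)"
    by (rule final_arith[OF lam0 tau_t t0 s0 E(1) F(1) key])
  thus ?thesis using lam0 unfolding lam_def t_def s_def by simp
qed

lemma col_diag_mult:
  fixes X D :: "real mat"
  assumes X: "X \<in> carrier_mat a r" and D: "D \<in> carrier_mat r r"
    and dg: "\<And>i j. i < r \<Longrightarrow> j < r \<Longrightarrow> i \<noteq> j \<Longrightarrow> D $$ (i,j) = 0" and i: "i < r"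
  shows "col (X * D) i = D $$ (i,i) \<cdot>\<^sub>v col X i"
proof (rule eq_vecI)
  fix k assume "k < dim_vec (D $$ (i,i) \<cdot>\<^sub>v col X i)"
  hence k: "k < a" using X by simp
  have "col (X * D) i $ k = (X * D) $$ (k,i)" using X D k i by simp
  also have "\<dots> = (\<Sum>l<r. X $$ (k,l) * D $$ (l,i))"
    by (rule mult_entry[where a=a and b=r and c=r]) (use X D k i in auto)
  also have "\<dots> = (\<Sum>l<r. if l = i then X $$ (k,i) * D $$ (i,i) else 0)"
    using dg i by (intro sum.cong) auto
  finally show "col (X * D) i $ k = (D $$ (i,i) \<cdot>\<^sub>v col X i) $ k" using i k X by simp
qed (use X D in auto)

lemma col_orth_unit:
  fixes Q :: "real mat"
  assumes Q: "Q \<in> carrier_mat n n" and QQ: "transpose_mat Q * Q = 1\<^sub>m n" and i: "i < n"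
  shows "vnorm (col Q i) = 1"
proof -
  have "col Q i \<bullet> col Q i = (\<Sum>k<n. Q $$ (k,i) * Q $$ (k,i))"
    using Q i by (subst dot_sum[of _ n]) auto
  also have "\<dots> = 1" using orth_entry[OF Q QQ i i] by simp
  finally show ?thesis unfolding vnorm_eq_sqrt by simp
qed

lemma sing_val_eig:
  fixes M :: "real mat"
  assumes M: "M \<in> carrier_mat r r" and i: "i < r"
  shows "\<exists>x. x \<in> carrier_vec r \<and> vnorm x = 1 \<and> (transpose_mat M * M) *\<^sub>v x = (sing_val M (i+1))^2 \<cdot>\<^sub>v x"
    "\<exists>x. x \<in> carrier_vec r \<and> vnorm x = 1 \<and> (M * transpose_mat M) *\<^sub>v x = (sing_val M (i+1))^2 \<cdot>\<^sub>v x"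
proof -
  define S0 where "S0 = (SOME S. \<exists>U V. is_svd M U S V)"
  have "\<exists>U V. is_svd M U S0 V" unfolding S0_def
    by (rule someI_ex) (use svd_exists_square[OF M] in blast)
  then obtain U V where svd: "is_svd M U S0 V" by blast
  note f = svd_facts[OF svd M]
  have sv: "sing_val M (i+1) = S0 $$ (i,i)"
    unfolding sing_val_def S0_def[symmetric] sval_def using f(3) i by simp
  define z where "z = S0 $$ (i,i)"
  have dg: "\<And>a b. a < r \<Longrightarrow> b < r \<Longrightarrow> a \<noteq> b \<Longrightarrow> S0 $$ (a,b) = 0" using f(8) by blast
  have dgT: "\<And>a b. a < r \<Longrightarrow> b < r \<Longrightarrow> a \<noteq> b \<Longrightarrow> transpose_mat S0 $$ (a,b) = 0" using f(3) f(8) by auto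
  have MV: "M * V = U * S0"
  proof -
    have "M * V = U * S0 * (transpose_mat V * V)"
      unfolding f(11) using f(1-3) by (subst assoc_mult_mat[of "U * S0" r r _ r _ r]) auto
    thus ?thesis using f by simp
  qed
  have MU: "transpose_mat M * U = V * transpose_mat S0"
  proof -
    have "transpose_mat M = V * transpose_mat S0 * transpose_mat U"
      using f(1-3) by (subst f(11)) (simp add: transpose_mult[of _ r r _ r] assoc_mult_mat[of _ r r _ r _ r])
    hence "transpose_mat M * U = V * transpose_mat S0 * (transpose_mat U * U)"
      using f(1-3) by (simp add: assoc_mult_mat[of _ r r _ r _ r])
    thus ?thesis using f by simp
  qed
  have Mv: "M *\<^sub>v col V i = z \<cdot>\<^sub>v col U i"
  proof -
    have "M *\<^sub>v col V i = col (M * V) i" by (rule col_mult2[OF M f(2) i, symmetric])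
    also have "\<dots> = z \<cdot>\<^sub>v col U i" unfolding MV z_def using col_diag_mult[OF f(1) f(3) dg i] .
    finally show ?thesis .
  qed
  have Mu: "transpose_mat M *\<^sub>v col U i = z \<cdot>\<^sub>v col V i"
  proof -
    have "transpose_mat M *\<^sub>v col U i = col (transpose_mat M * U) i"
      by (rule col_mult2[OF transpose_carrier_mat[THEN iffD2, OF M] f(1) i, symmetric])
    also have "\<dots> = z \<cdot>\<^sub>v col V i" unfolding MU z_def
      using col_diag_mult[OF f(2) _ dgT i] f(3) i by simp
    finally show ?thesis .
  qed
  have cV: "col V i \<in> carrier_vec r" and cU: "col U i \<in> carrier_vec r" using f(1,2) i by auto
  have "(transpose_mat M * M) *\<^sub>v col V i = z^2 \<cdot>\<^sub>v col V i"
    using M cV cU by (simp add: Mv Mu mult_mat_vec[of _ r r] smult_smult_assoc power2_eq_square)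
  thus "\<exists>x. x \<in> carrier_vec r \<and> vnorm x = 1 \<and> (transpose_mat M * M) *\<^sub>v x = (sing_val M (i+1))^2 \<cdot>\<^sub>v x"
    using cV col_orth_unit[OF f(2) f(5) i] sv z_def by metis
  have "(M * transpose_mat M) *\<^sub>v col U i = z^2 \<cdot>\<^sub>v col U i"
    using M cV cU by (simp add: Mv Mu mult_mat_vec[of _ r r] smult_smult_assoc power2_eq_square)
  thus "\<exists>x. x \<in> carrier_vec r \<and> vnorm x = 1 \<and> (M * transpose_mat M) *\<^sub>v x = (sing_val M (i+1))^2 \<cdot>\<^sub>v x"
    using cU col_orth_unit[OF f(1) f(4) i] sv z_def by metis
qed

lemma sin_theta_bound:
  fixes X Xt :: "real mat"
  assumes X: "X \<in> carrier_mat a r" and Xt: "Xt \<in> carrier_mat a r" and B: "B \<ge> 0"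
    and H: "(\<forall>x \<mu>. x \<in> carrier_vec r \<longrightarrow> vnorm x = 1 \<longrightarrow>
               (transpose_mat (transpose_mat X * Xt) * (transpose_mat X * Xt)) *\<^sub>v x = \<mu> \<cdot>\<^sub>v x \<longrightarrow>
               0 \<le> 1 - \<mu> \<and> sqrt (1 - \<mu>) \<le> B)
         \<or> (\<forall>x \<mu>. x \<in> carrier_vec r \<longrightarrow> vnorm x = 1 \<longrightarrow>
               ((transpose_mat X * Xt) * transpose_mat (transpose_mat X * Xt)) *\<^sub>v x = \<mu> \<cdot>\<^sub>v x \<longrightarrow>
               0 \<le> 1 - \<mu> \<and> sqrt (1 - \<mu>) \<le> B)"
  shows "spec_norm (sin_theta X Xt) \<le> B"
proof -
  define M where "M = transpose_mat X * Xt"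
  have M: "M \<in> carrier_mat r r" unfolding M_def using X Xt by simp
  define dd where "dd = (\<lambda>i. sqrt (1 - (sing_val M (i+1))^2))"
  have ddb: "0 \<le> 1 - (sing_val M (i+1))^2 \<and> dd i \<le> B" if i: "i < r" for i
  proof -
    obtain x1 where x1: "x1 \<in> carrier_vec r" "vnorm x1 = 1" "(transpose_mat M * M) *\<^sub>v x1 = (sing_val M (i+1))^2 \<cdot>\<^sub>v x1"
      using sing_val_eig(1)[OF M i] by blast
    obtain x2 where x2: "x2 \<in> carrier_vec r" "vnorm x2 = 1" "(M * transpose_mat M) *\<^sub>v x2 = (sing_val M (i+1))^2 \<cdot>\<^sub>v x2"
      using sing_val_eig(2)[OF M i] by blast
    from H[folded M_def] show ?thesis unfolding dd_def
    proof (elim disjE)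
      assume "\<forall>x \<mu>. x \<in> carrier_vec r \<longrightarrow> vnorm x = 1 \<longrightarrow> (transpose_mat M * M) *\<^sub>v x = \<mu> \<cdot>\<^sub>v x \<longrightarrow>
               0 \<le> 1 - \<mu> \<and> sqrt (1 - \<mu>) \<le> B"
      thus "0 \<le> 1 - (sing_val M (i+1))^2 \<and> sqrt (1 - (sing_val M (i+1))^2) \<le> B" using x1 by blast
    next
      assume "\<forall>x \<mu>. x \<in> carrier_vec r \<longrightarrow> vnorm x = 1 \<longrightarrow> (M * transpose_mat M) *\<^sub>v x = \<mu> \<cdot>\<^sub>v x \<longrightarrow>
               0 \<le> 1 - \<mu> \<and> sqrt (1 - \<mu>) \<le> B"
      thus "0 \<le> 1 - (sing_val M (i+1))^2 \<and> sqrt (1 - (sing_val M (i+1))^2) \<le> B" using x2 by blast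
    qed
  qed
  have ST: "sin_theta X Xt = mat r r (\<lambda>(i,j). if i = j then dd i else 0)"
    unfolding sin_theta_def dd_def M_def using X by simp
  show ?thesis unfolding ST
  proof (rule spec_norm_le[where a=r, OF _ B])
    fix z :: "real vec" assume z: "z \<in> carrier_vec r"
    have ent: "(mat r r (\<lambda>(i,j). if i = j then dd i else 0) *\<^sub>v z) $ i = dd i * z $ i" if "i < r" for i
    proof -
      have "(mat r r (\<lambda>(i,j). if i = j then dd i else 0) *\<^sub>v z) $ i
          = (\<Sum>k<r. mat r r (\<lambda>(i,j). if i = j then dd i else 0) $$ (i,k) * z $ k)"
        using z that by (intro mv_entry) auto
      also have "\<dots> = (\<Sum>k<r. if k = i then dd i * z $ i else 0)" using that by (intro sum.cong) auto
      finally show ?thesis using that by simp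
    qed
    have "(vnorm (mat r r (\<lambda>(i,j). if i = j then dd i else 0) *\<^sub>v z))^2 = (\<Sum>i<r. (dd i)^2 * (z $ i)^2)"
      unfolding vnorm_sq dot_self using ent by (simp add: power_mult_distrib)
    also have "\<dots> \<le> (\<Sum>i<r. B^2 * (z $ i)^2)"
    proof (rule sum_mono)
      fix i assume "i \<in> {..<r}"
      hence i: "i < r" by simp
      have "0 \<le> dd i" using ddb[OF i] unfolding dd_def by simp
      hence "(dd i)^2 \<le> B^2" using ddb[OF i] by (simp add: power_mono)
      thus "(dd i)^2 * (z $ i)^2 \<le> B^2 * (z $ i)^2" by (simp add: mult_right_mono)
    qed
    also have "\<dots> = (B * vnorm z)^2" using z unfolding power_mult_distrib vnorm_sq dot_self
      by (simp add: sum_distrib_left)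
    finally have "(vnorm (mat r r (\<lambda>(i,j). if i = j then dd i else 0) *\<^sub>v z))^2 \<le> (B * vnorm z)^2" .
    thus "vnorm (mat r r (\<lambda>(i,j). if i = j then dd i else 0) *\<^sub>v z) \<le> B * vnorm z"
      using B vnorm_nonneg[of z] by (simp add: power2_le_iff_abs_le)
  qed simp
qed

lemma transpose_norm:
  fixes M :: "real mat"
  assumes M: "M \<in> carrier_mat a b" and z: "z \<in> carrier_vec a"
  shows "vnorm (transpose_mat M *\<^sub>v z) \<le> spec_norm M * vnorm z"
proof -
  define u where "u = transpose_mat M *\<^sub>v z"
  have u: "u \<in> carrier_vec b" unfolding u_def using M z by simp
  have "(vnorm u)^2 = u \<bullet> u" by (rule vnorm_sq)
  also have "\<dots> = z \<bullet> (M *\<^sub>v u)" unfolding u_def using M z u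
    by (subst dot_transpose[of _ b a]) auto
  also have "\<dots> \<le> vnorm z * vnorm (M *\<^sub>v u)" using M z u by (intro cauchy_schwarz[of _ a]) auto
  also have "\<dots> \<le> vnorm z * (spec_norm M * vnorm u)"
    using spec_norm_ge[OF M u] vnorm_nonneg[of z] by (rule mult_left_mono)
  finally have "(vnorm u)^2 \<le> (spec_norm M * vnorm z) * vnorm u" by (simp add: ac_simps)
  hence "vnorm u \<le> spec_norm M * vnorm z \<or> vnorm u = 0"
    using vnorm_nonneg[of u] by (auto simp: power2_eq_square mult_le_cancel_right)
  thus ?thesis using spec_norm_nonneg[of M] vnorm_nonneg[of z] unfolding u_def by auto
qed

lemma vnorm_uminus: "vnorm (- v) = vnorm v"
  unfolding vnorm_def by simp

lemma vnorm_neg_mv: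
  fixes M :: "real mat"
  assumes "M \<in> carrier_mat a b" "v \<in> carrier_vec b"
  shows "vnorm ((- M) *\<^sub>v v) = vnorm (M *\<^sub>v v)"
  using assms by (simp add: vnorm_uminus)

lemma arith2:
  fixes t s E F N :: real
  assumes "t > s" "s \<ge> 0" "0 \<le> E" "E \<le> N" "0 \<le> F" "F \<le> N"
  shows "(t * E + s * F) / (t^2 - s^2) \<le> N / (t - s)"
proof -
  have ts: "t - s > 0" "t + s > 0" using assms by auto
  have eq: "t^2 - s^2 = (t - s) * (t + s)" by (simp add: algebra_simps power2_eq_square)
  have "t * E \<le> t * N" using assms by (intro mult_left_mono) auto
  moreover have "s * F \<le> s * N" using assms by (intro mult_left_mono) auto
  ultimately have "t * E + s * F \<le> (t + s) * N" by (simp add: algebra_simps)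
  hence "(t * E + s * F) / ((t - s) * (t + s)) \<le> ((t + s) * N) / ((t - s) * (t + s))"
    using ts by (intro divide_right_mono) auto
  also have "\<dots> = N / (t - s)" using ts by simp
  finally show ?thesis unfolding eq .
qed

lemma spec_norm_orth_le1:
  fixes Q :: "real mat"
  assumes Q: "Q \<in> carrier_mat a r" and QQ: "transpose_mat Q * Q = 1\<^sub>m r"
  shows "spec_norm Q \<le> 1"
  by (rule spec_norm_le[OF Q]) (use orth_vnorm[OF Q QQ] in auto)

lemma norm_mult_orth_right:
  fixes M Q :: "real mat"
  assumes M: "M \<in> carrier_mat a b" and Q: "Q \<in> carrier_mat b r" and QQ: "transpose_mat Q * Q = 1\<^sub>m r"
  shows "spec_norm (M * Q) \<le> spec_norm M"
proof (rule spec_norm_le[where a=a])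
  fix z :: "real vec" assume z: "z \<in> carrier_vec r"
  have "vnorm ((M * Q) *\<^sub>v z) = vnorm (M *\<^sub>v (Q *\<^sub>v z))" using M Q z by simp
  also have "\<dots> \<le> spec_norm M * vnorm (Q *\<^sub>v z)" using M Q z by (intro spec_norm_ge) auto
  also have "\<dots> = spec_norm M * vnorm z" using orth_vnorm[OF Q QQ z] by simp
  finally show "vnorm ((M * Q) *\<^sub>v z) \<le> spec_norm M * vnorm z" .
qed (use M Q spec_norm_nonneg in auto)

lemma norm_transpose_mult_orth:
  fixes M Q :: "real mat"
  assumes M: "M \<in> carrier_mat a b" and Q: "Q \<in> carrier_mat a r" and QQ: "transpose_mat Q * Q = 1\<^sub>m r"
  shows "spec_norm (transpose_mat M * Q) \<le> spec_norm M"
proof (rule spec_norm_le[where a=b])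
  fix z :: "real vec" assume z: "z \<in> carrier_vec r"
  have "vnorm ((transpose_mat M * Q) *\<^sub>v z) = vnorm (transpose_mat M *\<^sub>v (Q *\<^sub>v z))" using M Q z by simp
  also have "\<dots> \<le> spec_norm M * vnorm (Q *\<^sub>v z)" using M Q z by (intro transpose_norm) auto
  also have "\<dots> = spec_norm M * vnorm z" using orth_vnorm[OF Q QQ z] by simp
  finally show "vnorm ((transpose_mat M * Q) *\<^sub>v z) \<le> spec_norm M * vnorm z" .
qed (use M Q spec_norm_nonneg in auto)

lemma norm_orthT_mult:
  fixes M Q :: "real mat"
  assumes M: "M \<in> carrier_mat a b" and Q: "Q \<in> carrier_mat a r" and QQ: "transpose_mat Q * Q = 1\<^sub>m r"
  shows "spec_norm (transpose_mat Q * M) \<le> spec_norm M"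
proof (rule spec_norm_le[where a=r])
  fix z :: "real vec" assume z: "z \<in> carrier_vec b"
  have "vnorm ((transpose_mat Q * M) *\<^sub>v z) = vnorm (transpose_mat Q *\<^sub>v (M *\<^sub>v z))" using M Q z by simp
  also have "\<dots> \<le> spec_norm Q * vnorm (M *\<^sub>v z)" using M Q z by (intro transpose_norm) auto
  also have "\<dots> \<le> 1 * vnorm (M *\<^sub>v z)"
    using spec_norm_orth_le1[OF Q QQ] vnorm_nonneg by (intro mult_right_mono) auto
  also have "\<dots> \<le> spec_norm M * vnorm z" using spec_norm_ge[OF M z] by simp
  finally show "vnorm ((transpose_mat Q * M) *\<^sub>v z) \<le> spec_norm M * vnorm z" .
qed (use M Q spec_norm_nonneg in auto)

theorem theorem3p1:
  fixes A dA U S V Ut St Vt :: "real mat" and n m r :: nat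
  assumes A: "A \<in> carrier_mat n m" and dA: "dA \<in> carrier_mat n m"
    and r1: "1 \<le> r" and rlt: "r < min n m"
    and rk: "vec_space.rank n A \<ge> r"
    and svdA: "is_svd A U S V"
    and svdAt: "is_svd (A + dA) Ut St Vt"
    and gap1: "sval S r - sval St (r+1) > 0"
    and gap2: "sval St r - sval S (r+1) > 0"
  defines "U1 \<equiv> lead_cols U r" and "V1 \<equiv> lead_cols V r"
    and "Ut1 \<equiv> lead_cols Ut r" and "Vt1 \<equiv> lead_cols Vt r"
    and "s_r \<equiv> sval S r" and "s_r1 \<equiv> sval S (r+1)"
    and "t_r \<equiv> sval St r" and "t_r1 \<equiv> sval St (r+1)"
  shows
    "spec_norm (sin_theta U1 Ut1) \<le>
       min ((t_r * spec_norm (dA * Vt1) + s_r1 * spec_norm (transpose_mat dA * Ut1)) / (t_r^2 - s_r1^2))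
           ((s_r * spec_norm (dA * V1) + t_r1 * spec_norm (transpose_mat U1 * dA)) / (s_r^2 - t_r1^2))
     \<and> spec_norm (sin_theta V1 Vt1) \<le>
       min ((t_r * spec_norm (transpose_mat Ut1 * dA) + s_r1 * spec_norm (dA * Vt1)) / (t_r^2 - s_r1^2))
           ((s_r * spec_norm (transpose_mat U1 * dA) + t_r1 * spec_norm (dA * V1)) / (s_r^2 - t_r1^2))
     \<and> max (spec_norm (sin_theta U1 Ut1)) (spec_norm (sin_theta V1 Vt1)) \<le>
       min (1 / (s_r - t_r1)) (1 / (t_r - s_r1)) * spec_norm dA"
proof -
  define At where "At = A + dA"
  have At: "At \<in> carrier_mat n m" unfolding At_def using A dA by simp
  note fU = svd_facts[OF svdA A]
  note fT = svd_facts[OF svdAt[folded At_def] At]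
  have rn: "r \<le> n" "r \<le> m" "r < n" "r < m" using rlt by auto
  have sr: "s_r = S $$ (r-1,r-1)" unfolding s_r_def sval_def using fU(3) r1 rlt by auto
  have sr1: "s_r1 = S $$ (r,r)" unfolding s_r1_def sval_def using fU(3) r1 rlt by auto
  have tr: "t_r = St $$ (r-1,r-1)" unfolding t_r_def sval_def using fT(3) r1 rlt by auto
  have tr1: "t_r1 = St $$ (r,r)" unfolding t_r1_def sval_def using fT(3) r1 rlt by auto
  have g1: "t_r1 < s_r" using gap1 unfolding s_r_def t_r1_def by simp
  have g2: "s_r1 < t_r" using gap2 unfolding t_r_def s_r1_def by simp
  have s0: "0 \<le> s_r1" unfolding sr1 using fU(9)[of r] rlt by simp
  have t0: "0 \<le> t_r1" unfolding tr1 using fT(9)[of r] rlt by simp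
  have U1c: "U1 \<in> carrier_mat n r" unfolding U1_def using fU(1) by simp
  have V1c: "V1 \<in> carrier_mat m r" unfolding V1_def using fU(2) by simp
  have Ut1c: "Ut1 \<in> carrier_mat n r" unfolding Ut1_def using fT(1) by simp
  have Vt1c: "Vt1 \<in> carrier_mat m r" unfolding Vt1_def using fT(2) by simp
  have U1o: "transpose_mat U1 * U1 = 1\<^sub>m r" unfolding U1_def using lead_orth[OF fU(1) fU(4) rn(1)] .
  have V1o: "transpose_mat V1 * V1 = 1\<^sub>m r" unfolding V1_def using lead_orth[OF fU(2) fU(5) rn(2)] .
  have Ut1o: "transpose_mat Ut1 * Ut1 = 1\<^sub>m r" unfolding Ut1_def using lead_orth[OF fT(1) fT(4) rn(1)] .
  have Vt1o: "transpose_mat Vt1 * Vt1 = 1\<^sub>m r" unfolding Vt1_def using lead_orth[OF fT(2) fT(5) rn(2)] .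
  define e1 where "e1 = spec_norm (dA * Vt1)"
  define f1 where "f1 = spec_norm (transpose_mat dA * Ut1)"
  define e2 where "e2 = spec_norm (dA * V1)"
  define f2 where "f2 = spec_norm (transpose_mat U1 * dA)"
  define e3 where "e3 = spec_norm (transpose_mat Ut1 * dA)"
  define N where "N = spec_norm dA"
  have nn: "0 \<le> e1" "0 \<le> f1" "0 \<le> e2" "0 \<le> f2" "0 \<le> e3" "0 \<le> N"
    unfolding e1_def f1_def e2_def f2_def e3_def N_def by (simp_all add: spec_norm_nonneg)
  have hE1: "vnorm (dA *\<^sub>v (Vt1 *\<^sub>v z)) \<le> e1 * vnorm z" if z: "z \<in> carrier_vec r" for z
  proof -
    have "dA *\<^sub>v (Vt1 *\<^sub>v z) = (dA * Vt1) *\<^sub>v z" using dA Vt1c z by simp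
    thus ?thesis unfolding e1_def using spec_norm_ge[of "dA * Vt1" n r z] dA Vt1c z by simp
  qed
  have hF1: "vnorm (transpose_mat dA *\<^sub>v (Ut1 *\<^sub>v z)) \<le> f1 * vnorm z" if z: "z \<in> carrier_vec r" for z
  proof -
    have "transpose_mat dA *\<^sub>v (Ut1 *\<^sub>v z) = (transpose_mat dA * Ut1) *\<^sub>v z" using dA Ut1c z by simp
    thus ?thesis unfolding f1_def using spec_norm_ge[of "transpose_mat dA * Ut1" m r z] dA Ut1c z by simp
  qed
  have hE2: "vnorm (dA *\<^sub>v (V1 *\<^sub>v z)) \<le> e2 * vnorm z" if z: "z \<in> carrier_vec r" for z
  proof -
    have "dA *\<^sub>v (V1 *\<^sub>v z) = (dA * V1) *\<^sub>v z" using dA V1c z by simp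
    thus ?thesis unfolding e2_def using spec_norm_ge[of "dA * V1" n r z] dA V1c z by simp
  qed
  have hF2: "vnorm (transpose_mat dA *\<^sub>v (U1 *\<^sub>v z)) \<le> f2 * vnorm z" if z: "z \<in> carrier_vec r" for z
  proof -
    have "transpose_mat dA *\<^sub>v (U1 *\<^sub>v z) = transpose_mat (transpose_mat U1 * dA) *\<^sub>v z"
      using dA U1c z by (simp add: transpose_mult[of _ r n dA m])
    thus ?thesis unfolding f2_def using transpose_norm[of "transpose_mat U1 * dA" r m z] dA U1c z by simp
  qed
  have hE3: "vnorm (transpose_mat dA *\<^sub>v (Ut1 *\<^sub>v z)) \<le> e3 * vnorm z" if z: "z \<in> carrier_vec r" for z
  proof -
    have "transpose_mat dA *\<^sub>v (Ut1 *\<^sub>v z) = transpose_mat (transpose_mat Ut1 * dA) *\<^sub>v z"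
      using dA Ut1c z by (simp add: transpose_mult[of _ r n dA m])
    thus ?thesis unfolding e3_def using transpose_norm[of "transpose_mat Ut1 * dA" r m z] dA Ut1c z by simp
  qed
  have le: "e1 \<le> N" "f1 \<le> N" "e2 \<le> N" "f2 \<le> N" "e3 \<le> N"
    unfolding e1_def f1_def e2_def f2_def e3_def N_def
    using norm_mult_orth_right[OF dA Vt1c Vt1o] norm_transpose_mult_orth[OF dA Ut1c Ut1o]
      norm_mult_orth_right[OF dA V1c V1o] norm_orthT_mult[OF dA U1c U1o] norm_orthT_mult[OF dA Ut1c Ut1o]
    by auto
  have ATc: "transpose_mat A \<in> carrier_mat m n" "transpose_mat dA \<in> carrier_mat m n" using A dA by auto
  have rlt': "r < min m n" using rlt by simp
  have svdAT: "is_svd (transpose_mat A) V (transpose_mat S) U" using svd_transpose[OF svdA A] .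
  have svdAtT: "is_svd (transpose_mat A + transpose_mat dA) Vt (transpose_mat St) Ut"
    using svd_transpose[OF svdAt[folded At_def] At] unfolding At_def using A dA by (simp add: transpose_add)
  have ST: "transpose_mat S $$ (r,r) = S $$ (r,r)" "transpose_mat S $$ (r-1,r-1) = S $$ (r-1,r-1)"
    "transpose_mat St $$ (r,r) = St $$ (r,r)" "transpose_mat St $$ (r-1,r-1) = St $$ (r-1,r-1)"
    using fU(3) fT(3) rn by auto
  have mdA: "- dA \<in> carrier_mat n m" using dA by simp
  have mdAT: "- transpose_mat dA \<in> carrier_mat m n" using dA by simp
  have AtA: "At + - dA = A" unfolding At_def using A dA by (intro eq_matI) auto
  have AtAT: "(transpose_mat A + transpose_mat dA) + - transpose_mat dA = transpose_mat A"
    using A dA by (intro eq_matI) auto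
  have svdA': "is_svd (At + - dA) U S V" unfolding AtA by (rule svdA)
  have svdAT': "is_svd ((transpose_mat A + transpose_mat dA) + - transpose_mat dA) V (transpose_mat S) U"
    unfolding AtAT by (rule svdAT)
  have AtTc: "transpose_mat A + transpose_mat dA \<in> carrier_mat m n" using A dA by simp
  have C1: "0 \<le> 1 - \<mu> \<and> sqrt (1 - \<mu>) \<le> (t_r * e1 + s_r1 * f1) / (t_r^2 - s_r1^2)"
    if "x \<in> carrier_vec r" "vnorm x = 1"
       "(transpose_mat (transpose_mat U1 * Ut1) * (transpose_mat U1 * Ut1)) *\<^sub>v x = \<mu> \<cdot>\<^sub>v x" for x \<mu>
    using core[OF A dA r1 rlt svdA svdAt _ nn(1) _ nn(2) _ that(1,2), of \<mu>] g2 hE1 hF1 that(3)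
    unfolding tr sr1 U1_def Ut1_def Vt1_def by auto
  have C2: "0 \<le> 1 - \<mu> \<and> sqrt (1 - \<mu>) \<le> (s_r * e2 + t_r1 * f2) / (s_r^2 - t_r1^2)"
    if "x \<in> carrier_vec r" "vnorm x = 1"
       "((transpose_mat U1 * Ut1) * transpose_mat (transpose_mat U1 * Ut1)) *\<^sub>v x = \<mu> \<cdot>\<^sub>v x" for x \<mu>
  proof -
    have eqM: "transpose_mat (transpose_mat Ut1 * U1) * (transpose_mat Ut1 * U1)
        = (transpose_mat U1 * Ut1) * transpose_mat (transpose_mat U1 * Ut1)"
      using U1c Ut1c by (simp add: transpose_mult[of _ r n _ r])
    show ?thesis
      using core[OF At mdA r1 rlt svdAt[folded At_def] svdA' _ nn(3) _ nn(4) _ that(1,2), of \<mu>] g1 that(3) eqM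
        hE2 hF2 vnorm_neg_mv[OF dA] vnorm_neg_mv[OF ATc(2)] V1c U1c
      unfolding sr tr1 U1_def Ut1_def V1_def transpose_uminus by auto
  qed
  have C3: "0 \<le> 1 - \<mu> \<and> sqrt (1 - \<mu>) \<le> (t_r * e3 + s_r1 * e1) / (t_r^2 - s_r1^2)"
    if "x \<in> carrier_vec r" "vnorm x = 1"
       "(transpose_mat (transpose_mat V1 * Vt1) * (transpose_mat V1 * Vt1)) *\<^sub>v x = \<mu> \<cdot>\<^sub>v x" for x \<mu>
    using core[OF ATc r1 rlt' svdAT svdAtT _ nn(5) _ nn(1) _ that(1,2), of \<mu>]
      r1 g2 hE3 hE1 that(3) rlt
    unfolding tr sr1 ST V1_def Vt1_def Ut1_def transpose_transpose by auto
  have C4: "0 \<le> 1 - \<mu> \<and> sqrt (1 - \<mu>) \<le> (s_r * f2 + t_r1 * e2) / (s_r^2 - t_r1^2)"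
    if "x \<in> carrier_vec r" "vnorm x = 1"
       "((transpose_mat V1 * Vt1) * transpose_mat (transpose_mat V1 * Vt1)) *\<^sub>v x = \<mu> \<cdot>\<^sub>v x" for x \<mu>
  proof -
    have eqM: "transpose_mat (transpose_mat Vt1 * V1) * (transpose_mat Vt1 * V1)
        = (transpose_mat V1 * Vt1) * transpose_mat (transpose_mat V1 * Vt1)"
      using V1c Vt1c by (simp add: transpose_mult[of _ r m _ r])
    show ?thesis
      using core[OF AtTc mdAT r1 rlt' svdAtT svdAT' _ nn(4) _ nn(3) _ that(1,2), of \<mu>]
        r1 rlt g1 that(3) eqM hF2 hE2 vnorm_neg_mv[OF ATc(2)] vnorm_neg_mv[OF dA] V1c U1c
      unfolding sr tr1 ST U1_def V1_def Vt1_def transpose_uminus transpose_transpose by auto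
  qed
  have b1n: "0 \<le> (t_r * e1 + s_r1 * f1) / (t_r^2 - s_r1^2)"
    and b2n: "0 \<le> (s_r * e2 + t_r1 * f2) / (s_r^2 - t_r1^2)"
    and c1n: "0 \<le> (t_r * e3 + s_r1 * e1) / (t_r^2 - s_r1^2)"
    and c2n: "0 \<le> (s_r * f2 + t_r1 * e2) / (s_r^2 - t_r1^2)"
  proof -
    have d1: "t_r^2 - s_r1^2 > 0" using power_strict_mono[of s_r1 t_r 2] g2 s0 by simp
    have d2: "s_r^2 - t_r1^2 > 0" using power_strict_mono[of t_r1 s_r 2] g1 t0 by simp
    have p: "0 \<le> t_r" "0 \<le> s_r" using g1 g2 s0 t0 by auto
    show "0 \<le> (t_r * e1 + s_r1 * f1) / (t_r^2 - s_r1^2)" by (intro divide_nonneg_pos add_nonneg_nonneg mult_nonneg_nonneg) (use d1 p s0 s0 t0 nn in auto)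
    show "0 \<le> (s_r * e2 + t_r1 * f2) / (s_r^2 - t_r1^2)" by (intro divide_nonneg_pos add_nonneg_nonneg mult_nonneg_nonneg) (use d2 p t0 s0 t0 nn in auto)
    show "0 \<le> (t_r * e3 + s_r1 * e1) / (t_r^2 - s_r1^2)" by (intro divide_nonneg_pos add_nonneg_nonneg mult_nonneg_nonneg) (use d1 p s0 s0 t0 nn in auto)
    show "0 \<le> (s_r * f2 + t_r1 * e2) / (s_r^2 - t_r1^2)" by (intro divide_nonneg_pos add_nonneg_nonneg mult_nonneg_nonneg) (use d2 p t0 s0 t0 nn in auto)
  qed
  have U_b1: "spec_norm (sin_theta U1 Ut1) \<le> (t_r * e1 + s_r1 * f1) / (t_r^2 - s_r1^2)"
    by (rule sin_theta_bound[OF U1c Ut1c b1n]) (use C1 in blast)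
  have U_b2: "spec_norm (sin_theta U1 Ut1) \<le> (s_r * e2 + t_r1 * f2) / (s_r^2 - t_r1^2)"
    by (rule sin_theta_bound[OF U1c Ut1c b2n]) (use C2 in blast)
  have V_c1: "spec_norm (sin_theta V1 Vt1) \<le> (t_r * e3 + s_r1 * e1) / (t_r^2 - s_r1^2)"
    by (rule sin_theta_bound[OF V1c Vt1c c1n]) (use C3 in blast)
  have V_c2: "spec_norm (sin_theta V1 Vt1) \<le> (s_r * f2 + t_r1 * e2) / (s_r^2 - t_r1^2)"
    by (rule sin_theta_bound[OF V1c Vt1c c2n]) (use C4 in blast)
  have a1: "(t_r * e1 + s_r1 * f1) / (t_r^2 - s_r1^2) \<le> N / (t_r - s_r1)"
    by (rule arith2[OF g2 s0 nn(1) le(1) nn(2) le(2)])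
  have a2: "(s_r * e2 + t_r1 * f2) / (s_r^2 - t_r1^2) \<le> N / (s_r - t_r1)"
    by (rule arith2[OF g1 t0 nn(3) le(3) nn(4) le(4)])
  have a3: "(t_r * e3 + s_r1 * e1) / (t_r^2 - s_r1^2) \<le> N / (t_r - s_r1)"
    by (rule arith2[OF g2 s0 nn(5) le(5) nn(1) le(1)])
  have a4: "(s_r * f2 + t_r1 * e2) / (s_r^2 - t_r1^2) \<le> N / (s_r - t_r1)"
    by (rule arith2[OF g1 t0 nn(4) le(4) nn(3) le(3)])
  have mm: "min (1 / (s_r - t_r1)) (1 / (t_r - s_r1)) * N = min (N / (s_r - t_r1)) (N / (t_r - s_r1))"
    using nn(6) by (simp add: min_mult_distrib_right)
  have third: "max (spec_norm (sin_theta U1 Ut1)) (spec_norm (sin_theta V1 Vt1)) \<le>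
       min (1 / (s_r - t_r1)) (1 / (t_r - s_r1)) * N"
    unfolding mm using U_b1 U_b2 V_c1 V_c2 a1 a2 a3 a4 by simp
  show ?thesis using U_b1 U_b2 V_c1 V_c2 third
    unfolding e1_def f1_def e2_def f2_def e3_def N_def by simp
qed


end
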